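(* Let $\lambda$ be a partition with at most $n$ parts. The interpolation ASEP polynomials $\{f^*_\mu:\mu\in S_n(\lambda)\}$ form a basis of $V^*_\lambda$. Consequently $\{f^*_\mu:\mu\in\mathbb{N}^n\}$ is a basis of the polynomial ring $\mathbb{Q}(q,t)[x_1,\dots,x_n]$.
   Context: Polynomials are in $x_1,\dots,x_n$ over $\mathbb{Q}(q,t)$; $\mathcal{P}_n^{(d)}$ denotes polynomials of degree at most $d$. For $\mu\in\mathbb{N}^n$ let $k_i(\mu)=\#\{j<i:\mu_j>\mu_i\}+\#\{j>i:\mu_j\ge\mu_i\}$ and $\widetilde\mu=(q^{\mu_1}t^{-k_1(\mu)},\dots,q^{\mu_n}t^{-k_n(\mu)})$. For $\mu\in\mathbb{N}^n$, $|\mu|=d$, $E^*_\mu$ is the unique polynomial in $\mathcal{P}_n^{(d)}$ with coefficient of $x^\mu$ equal to $1$ and $E^*_\mu(\widetilde\nu)=0$ for all $\nu\in\mathbb{N}^n$, $|\nu|\le d$, $\nu\ne\mu$. $S_n$ acts on compositions by $\sigma\cdot\mu=(\mu_{\sigma^{-1}(1)},\dots,\mu_{\sigma^{-1}(n)})$ and on polynomials by permuting variables; $s_i=(i,i+1)$; $T_i=t-\frac{tx_i-x_{i+1}}{x_i-x_{i+1}}(1-s_i)$; $T_\sigma=T_{i_1}\cdots T_{i_\ell}$ for a reduced word. $S_n(\lambda)$ is the set of rearrangements of $\lambda$; for $\mu\in S_n(\lambda)$, $\sigma_\mu$ is the shortest permutation with $\sigma_\mu(\lambda)=\mu$, and $f^*_\mu=T_{\sigma_\mu}E^*_\lambda$.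 For a partition $\lambda$ of size $d$, $V^*_\lambda=\{f\in\mathcal{P}_n^{(d)}: f(\widetilde\nu)=0\ \forall\nu\in\mathbb{N}^n, |\nu|\le|\lambda|, \nu\notin S_n(\lambda)\}$. *)

theory Defs
  imports "HOL-Library.Poly_Mapping" "HOL-Library.Multiset"
    "HOL-Computational_Algebra.Polynomial" "HOL-Computational_Algebra.Fraction_Field"
begin

text \<open>Q(q,t) is the fraction field of Q[q][t] = rat poly poly; q is the inner
  indeterminate, t the outer one.\<close>
type_synonym K = "rat poly poly fract"

definition qq :: K where "qq = Fract [:[:0, 1:]:] 1"
definition tt :: K where "tt = Fract [:0, 1:] 1"

text \<open>A polynomial is a finitely supported map from exponent vectors to coefficients.
  Variables are indexed from 0 (x_(i+1) of the paper is index i).\<close>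
type_synonym mpoly = "(nat \<Rightarrow>\<^sub>0 nat) \<Rightarrow>\<^sub>0 K"

definition var :: "nat \<Rightarrow> mpoly" where
  "var i = Poly_Mapping.single (Poly_Mapping.single i 1) 1"

definition mconst :: "K \<Rightarrow> mpoly" where
  "mconst c = Poly_Mapping.single 0 c"

definition scal :: "K \<Rightarrow> mpoly \<Rightarrow> mpoly" where
  "scal c f = mconst c * f"

definition expo :: "nat list \<Rightarrow> (nat \<Rightarrow>\<^sub>0 nat)" where
  "expo mu = Poly_Mapping.nth mu"

definition mcoeff :: "mpoly \<Rightarrow> nat list \<Rightarrow> K" where
  "mcoeff f mu = Poly_Mapping.lookup f (expo mu)"

definition mdeg :: "(nat \<Rightarrow>\<^sub>0 nat) \<Rightarrow> nat" where
  "mdeg m = (\<Sum>i\<in>Poly_Mapping.keys m. Poly_Mapping.lookup m i)"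

definition polys :: "nat \<Rightarrow> mpoly set" where
  "polys n = {f. \<forall>m\<in>Poly_Mapping.keys f. Poly_Mapping.keys m \<subseteq> {..<n}}"

definition polys_deg :: "nat \<Rightarrow> nat \<Rightarrow> mpoly set" where
  "polys_deg n d = {f \<in> polys n. \<forall>m\<in>Poly_Mapping.keys f. mdeg m \<le> d}"

definition eval :: "mpoly \<Rightarrow> K list \<Rightarrow> K" where
  "eval f v = (\<Sum>m\<in>Poly_Mapping.keys f. Poly_Mapping.lookup f m * (\<Prod>i\<in>Poly_Mapping.keys m. (v ! i) ^ Poly_Mapping.lookup m i))"

definition comps :: "nat \<Rightarrow> nat list set" where
  "comps n = {mu. length mu = n}"

definition kk :: "nat list \<Rightarrow> nat \<Rightarrow> nat" where
  "kk mu i = card {j. j < i \<and> mu ! j > mu ! i}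
           + card {j. i < j \<and> j < length mu \<and> mu ! j \<ge> mu ! i}"

definition tilde :: "nat list \<Rightarrow> K list" where
  "tilde mu = map (\<lambda>i. qq ^ (mu ! i) * (inverse tt) ^ kk mu i) [0..<length mu]"

definition Estar :: "nat list \<Rightarrow> mpoly" where
  "Estar mu = (THE f. f \<in> polys_deg (length mu) (sum_list mu) \<and> mcoeff f mu = 1 \<and>
      (\<forall>nu \<in> comps (length mu). sum_list nu \<le> sum_list mu \<and> nu \<noteq> mu
          \<longrightarrow> eval f (tilde nu) = 0))"

definition swp :: "nat \<Rightarrow> nat \<Rightarrow> nat" where
  "swp i j = (if j = i then Suc i else if j = Suc i then i else j)"

definition swap_poly :: "nat \<Rightarrow> mpoly \<Rightarrow> mpoly" where
  "swap_poly i f = Poly_Mapping.map_key (\<lambda>m. Poly_Mapping.map_key (swp i) m) f"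

definition ddiff :: "nat \<Rightarrow> mpoly \<Rightarrow> mpoly" where
  "ddiff i f = (THE g. (var i - var (Suc i)) * g = f - swap_poly i f)"

definition Top :: "nat \<Rightarrow> mpoly \<Rightarrow> mpoly" where
  "Top i f = scal tt f - (scal tt (var i) - var (Suc i)) * ddiff i f"

definition Tword :: "nat list \<Rightarrow> mpoly \<Rightarrow> mpoly" where
  "Tword w f = foldr Top w f"

definition words :: "nat \<Rightarrow> nat list set" where
  "words n = {w. \<forall>i \<in> set w. Suc i < n}"

definition wperm :: "nat list \<Rightarrow> nat \<Rightarrow> nat" where
  "wperm w = foldr (\<lambda>i s. swp i \<circ> s) w id"

definition act :: "(nat \<Rightarrow> nat) \<Rightarrow> nat list \<Rightarrow> nat list" where
  "act s mu = map (\<lambda>i. mu ! (inv s i)) [0..<length mu]"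

definition redword :: "nat list \<Rightarrow> nat list \<Rightarrow> nat list" where
  "redword lam mu = (SOME w. w \<in> words (length lam) \<and> act (wperm w) lam = mu \<and>
      (\<forall>w' \<in> words (length lam). act (wperm w') lam = mu \<longrightarrow> length w \<le> length w'))"

definition rearr :: "nat list \<Rightarrow> nat list set" where
  "rearr lam = {mu. length mu = length lam \<and> mset mu = mset lam}"

definition fstar :: "nat list \<Rightarrow> mpoly" where
  "fstar mu = Tword (redword (rev (sort mu)) mu) (Estar (rev (sort mu)))"

definition is_partition :: "nat list \<Rightarrow> bool" where
  "is_partition lam \<longleftrightarrow> sorted (rev lam)"

definition Vstar :: "nat list \<Rightarrow> mpoly set" where
  "Vstar lam = {f \<in> polys_deg (length lam) (sum_list lam).
      \<forall>nu \<in> comps (length lam). sum_list nu \<le> sum_list lam \<and> nu \<notin> rearr lam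
          \<longrightarrow> eval f (tilde nu) = 0}"

definition is_basis_family :: "(nat list \<Rightarrow> mpoly) \<Rightarrow> nat list set \<Rightarrow> mpoly set \<Rightarrow> bool" where
  "is_basis_family b I V \<longleftrightarrow>
     (\<forall>i \<in> I. b i \<in> V) \<and>
     (\<forall>S c. finite S \<and> S \<subseteq> I \<and> (\<Sum>i\<in>S. scal (c i) (b i)) = 0 \<longrightarrow> (\<forall>i\<in>S. c i = 0)) \<and>
     (\<forall>g \<in> V. \<exists>S c. finite S \<and> S \<subseteq> I \<and> g = (\<Sum>i\<in>S. scal (c i) (b i)))"

end

theory Submission
  imports Defs "Jordan_Normal_Form.Determinant"
begin


definition mnm :: "(nat \<Rightarrow>\<^sub>0 nat) \<Rightarrow> K list \<Rightarrow> K" where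
  "mnm m v = (\<Prod>i\<in>Poly_Mapping.keys m. (v ! i) ^ Poly_Mapping.lookup m i)"

lemma mnm_superset:
  assumes "finite S" "Poly_Mapping.keys m \<subseteq> S"
  shows "mnm m v = (\<Prod>i\<in>S. (v ! i) ^ Poly_Mapping.lookup m i)"
  unfolding mnm_def using assms
  by (intro prod.mono_neutral_left) (auto simp: in_keys_iff)

lemma mnm_add: "mnm (k + l) v = mnm k v * mnm l v"
proof -
  let ?S = "Poly_Mapping.keys k \<union> Poly_Mapping.keys l"
  have "mnm (k + l) v = (\<Prod>i\<in>?S. (v ! i) ^ Poly_Mapping.lookup (k + l) i)"
    by (rule mnm_superset) (auto simp: keys_add)
  also have "\<dots> = (\<Prod>i\<in>?S. (v ! i) ^ Poly_Mapping.lookup k i) * (\<Prod>i\<in>?S. (v ! i) ^ Poly_Mapping.lookup l i)"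
    by (simp add: lookup_add power_add prod.distrib)
  also have "\<dots> = mnm k v * mnm l v"
    by (subst (1 2) mnm_superset[of ?S]) auto
  finally show ?thesis .
qed

lemma mnm_zero [simp]: "mnm 0 v = 1"
  by (simp add: mnm_def)

lemma mnm_single1: "mnm (Poly_Mapping.single i 1) v = v ! i"
  unfolding mnm_def by (simp only: keys_single lookup_single_eq) simp

lemma eval_alt: "eval f v = (\<Sum>m\<in>Poly_Mapping.keys f. Poly_Mapping.lookup f m * mnm m v)"
  by (simp add: eval_def mnm_def)

lemma eval_superset:
  assumes "finite S" "Poly_Mapping.keys f \<subseteq> S"
  shows "eval f v = (\<Sum>m\<in>S. Poly_Mapping.lookup f m * mnm m v)"
  unfolding eval_alt using assms
  by (intro sum.mono_neutral_left) (auto simp: in_keys_iff)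

lemma eval_add: "eval (f + g) v = eval f v + eval g v"
proof -
  let ?S = "Poly_Mapping.keys f \<union> Poly_Mapping.keys g"
  have "eval (f + g) v = (\<Sum>m\<in>?S. Poly_Mapping.lookup (f + g) m * mnm m v)"
    by (rule eval_superset) (auto simp: keys_add)
  also have "\<dots> = (\<Sum>m\<in>?S. Poly_Mapping.lookup f m * mnm m v) + (\<Sum>m\<in>?S. Poly_Mapping.lookup g m * mnm m v)"
    by (simp add: lookup_add distrib_right sum.distrib)
  also have "\<dots> = eval f v + eval g v"
    by (subst (1 2) eval_superset[of ?S]) auto
  finally show ?thesis .
qed

lemma eval_zero [simp]: "eval 0 v = 0"
  by (simp add: eval_def)

lemma eval_uminus: "eval (- f) v = - eval f v"
proof -
  have "eval (- f) v + eval f v = 0"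
    by (simp flip: eval_add)
  then show ?thesis by (simp add: eq_neg_iff_add_eq_0)
qed

lemma eval_diff: "eval (f - g) v = eval f v - eval g v"
  using eval_add[of f "- g" v] by (simp add: eval_uminus)

lemma eval_sum: "eval (\<Sum>x\<in>A. F x) v = (\<Sum>x\<in>A. eval (F x) v)"
  by (induction A rule: infinite_finite_induct) (auto simp: eval_add)

lemma eval_single: "eval (Poly_Mapping.single m c) v = c * mnm m v"
  by (simp add: eval_alt)

lemma poly_expand: "f = (\<Sum>m\<in>Poly_Mapping.keys (f::'a \<Rightarrow>\<^sub>0 'b::comm_monoid_add). Poly_Mapping.single m (Poly_Mapping.lookup f m))"
proof (rule poly_mapping_eqI)
  fix k
  show "Poly_Mapping.lookup f k = Poly_Mapping.lookup (\<Sum>m\<in>Poly_Mapping.keys f. Poly_Mapping.single m (Poly_Mapping.lookup f m)) k"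
    by (cases "k \<in> Poly_Mapping.keys f")
       (auto simp: lookup_sum lookup_single when_def in_keys_iff)
qed

lemma eval_mult: "eval (f * g) v = eval f v * eval g v"
proof -
  have "f * g = (\<Sum>m\<in>Poly_Mapping.keys f. Poly_Mapping.single m (Poly_Mapping.lookup f m)) *
       (\<Sum>l\<in>Poly_Mapping.keys g. Poly_Mapping.single l (Poly_Mapping.lookup g l))"
    by (subst (1) poly_expand[of f], subst (1) poly_expand[of g]) (rule refl)
  also have "\<dots> = (\<Sum>m\<in>Poly_Mapping.keys f. \<Sum>l\<in>Poly_Mapping.keys g.
        Poly_Mapping.single (m + l) (Poly_Mapping.lookup f m * Poly_Mapping.lookup g l))"
    by (simp add: sum_product mult_single)
  finally have "eval (f * g) v = (\<Sum>m\<in>Poly_Mapping.keys f. \<Sum>l\<in>Poly_Mapping.keys g.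
        Poly_Mapping.lookup f m * Poly_Mapping.lookup g l * (mnm m v * mnm l v))"
    by (simp add: eval_sum eval_single mnm_add)
  also have "\<dots> = eval f v * eval g v"
    by (simp add: eval_alt sum_product mult_ac)
  finally show ?thesis .
qed

lemma eval_one [simp]: "eval 1 v = 1"
  by (simp flip: single_one add: eval_single)

lemma eval_var [simp]: "eval (var i) v = v ! i"
  unfolding var_def eval_single mnm_single1 by simp

lemma eval_mconst [simp]: "eval (mconst c) v = c"
  by (simp add: mconst_def eval_single)

lemma eval_scal [simp]: "eval (scal c f) v = c * eval f v"
  by (simp add: scal_def eval_mult)

lemma eval_power: "eval (f ^ k) v = eval f v ^ k"
  by (induction k) (auto simp: eval_mult)

lemma eval_prod: "eval (\<Prod>x\<in>A. F x) v = (\<Prod>x\<in>A. eval (F x) v)"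
  by (induction A rule: infinite_finite_induct) (auto simp: eval_mult)

lemma mconst_add: "mconst (a + b) = mconst a + mconst b"
  by (simp add: mconst_def single_add)

lemma mconst_mult: "mconst (a * b) = mconst a * mconst b"
  by (simp add: mconst_def mult_single)

lemma mconst_0 [simp]: "mconst 0 = 0" by (simp add: mconst_def)
lemma mconst_1 [simp]: "mconst 1 = 1" by (simp add: mconst_def)

lemma scal_add_left: "scal (a + b) f = scal a f + scal b f"
  by (simp add: scal_def mconst_add distrib_right)
lemma scal_add_right: "scal a (f + g) = scal a f + scal a g"
  by (simp add: scal_def distrib_left)
lemma scal_diff_right: "scal a (f - g) = scal a f - scal a g"
  by (simp add: scal_def right_diff_distrib)
lemma scal_0 [simp]: "scal 0 f = 0" by (simp add: scal_def)
lemma scal_0_right [simp]: "scal a 0 = 0" by (simp add: scal_def)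
lemma scal_1 [simp]: "scal 1 f = f" by (simp add: scal_def)
lemma scal_scal: "scal a (scal b f) = scal (a * b) f"
  by (simp add: scal_def mconst_mult mult.assoc)
lemma scal_sum_right: "scal a (\<Sum>x\<in>A. F x) = (\<Sum>x\<in>A. scal a (F x))"
  by (simp add: scal_def sum_distrib_left)
lemma scal_sum_left: "scal (\<Sum>x\<in>A. F x) f = (\<Sum>x\<in>A. scal (F x) f)"
  by (induction A rule: infinite_finite_induct) (auto simp: scal_add_left)

lemma lookup_scal: "Poly_Mapping.lookup (scal c f) m = c * Poly_Mapping.lookup f m"
proof -
  have "scal c f = Poly_Mapping.map ((*) c) f"
    by (simp add: scal_def mconst_def mult_map_scale_conv_mult)
  then show ?thesis
    by (simp add: Poly_Mapping.map.rep_eq when_def)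
qed

lemma keys_add_nat: "Poly_Mapping.keys (k + l :: nat \<Rightarrow>\<^sub>0 nat) = Poly_Mapping.keys k \<union> Poly_Mapping.keys l"
  by (auto simp: in_keys_iff lookup_add)

lemma mdeg_superset:
  assumes "finite S" "Poly_Mapping.keys m \<subseteq> S"
  shows "mdeg m = (\<Sum>i\<in>S. Poly_Mapping.lookup m i)"
  unfolding mdeg_def using assms
  by (intro sum.mono_neutral_left) (auto simp: in_keys_iff)

lemma mdeg_add: "mdeg (k + l) = mdeg k + mdeg l"
proof -
  let ?S = "Poly_Mapping.keys k \<union> Poly_Mapping.keys l"
  have "mdeg (k + l) = (\<Sum>i\<in>?S. Poly_Mapping.lookup (k + l) i)"
    by (rule mdeg_superset) (auto simp: keys_add)
  also have "\<dots> = (\<Sum>i\<in>?S. Poly_Mapping.lookup k i) + (\<Sum>i\<in>?S. Poly_Mapping.lookup l i)"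
    by (simp add: lookup_add sum.distrib)
  also have "\<dots> = mdeg k + mdeg l"
    by (subst (1 2) mdeg_superset[of ?S]) auto
  finally show ?thesis .
qed

lemma mdeg_zero [simp]: "mdeg 0 = 0" by (simp add: mdeg_def)
lemma mdeg_single [simp]: "mdeg (Poly_Mapping.single i a) = a"
  by (simp add: mdeg_def)

abbreviation pd where "pd \<equiv> polys_deg"

lemma pd_iff: "f \<in> pd n d \<longleftrightarrow> (\<forall>m\<in>Poly_Mapping.keys f. Poly_Mapping.keys m \<subseteq> {..<n} \<and> mdeg m \<le> d)"
  by (auto simp: polys_deg_def polys_def)

lemma pd_zero [simp]: "0 \<in> pd n d" by (simp add: pd_iff)

lemma pd_add: "f \<in> pd n d \<Longrightarrow> g \<in> pd n d \<Longrightarrow> f + g \<in> pd n d"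
  unfolding pd_iff using keys_add[of f g] by blast

lemma pd_uminus: "f \<in> pd n d \<Longrightarrow> - f \<in> pd n d"
  unfolding pd_iff by (simp add: in_keys_iff)

lemma pd_diff: "f \<in> pd n d \<Longrightarrow> g \<in> pd n d \<Longrightarrow> f - g \<in> pd n d"
  using pd_add[of f n d "- g"] pd_uminus[of g n d] by simp

lemma pd_sum: "(\<And>x. x \<in> A \<Longrightarrow> F x \<in> pd n d) \<Longrightarrow> (\<Sum>x\<in>A. F x) \<in> pd n d"
  by (induction A rule: infinite_finite_induct) (auto intro: pd_add)

lemma pd_mono: "f \<in> pd n d \<Longrightarrow> d \<le> d' \<Longrightarrow> f \<in> pd n d'"
  unfolding pd_iff by force

lemma pd_mult: "f \<in> pd n a \<Longrightarrow> g \<in> pd n b \<Longrightarrow> f * g \<in> pd n (a + b)"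
  unfolding pd_iff
proof
  fix m assume f: "\<forall>m\<in>Poly_Mapping.keys f. Poly_Mapping.keys m \<subseteq> {..<n} \<and> mdeg m \<le> a"
    and g: "\<forall>m\<in>Poly_Mapping.keys g. Poly_Mapping.keys m \<subseteq> {..<n} \<and> mdeg m \<le> b"
    and m: "m \<in> Poly_Mapping.keys (f * g)"
  then obtain k l where "m = k + l" "k \<in> Poly_Mapping.keys f" "l \<in> Poly_Mapping.keys g"
    using keys_mult[of f g] by blast
  with f g show "Poly_Mapping.keys m \<subseteq> {..<n} \<and> mdeg m \<le> a + b"
    by (auto simp: keys_add_nat mdeg_add add_mono)
qed

lemma pd_single: "Poly_Mapping.keys m \<subseteq> {..<n} \<Longrightarrow> mdeg m \<le> d \<Longrightarrow> Poly_Mapping.single m c \<in> pd n d"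
  unfolding pd_iff by simp

lemma pd_var: "i < n \<Longrightarrow> var i \<in> pd n 1"
  unfolding var_def by (rule pd_single) auto

lemma pd_mconst: "mconst c \<in> pd n d"
  unfolding mconst_def by (rule pd_single) auto

lemma pd_one: "1 \<in> pd n d"
  using pd_mconst[of 1] by simp

lemma pd_scal: "f \<in> pd n d \<Longrightarrow> scal c f \<in> pd n d"
  unfolding scal_def using pd_mult[OF pd_mconst, of f n d c 0] by simp

lemma pd_power: "f \<in> pd n a \<Longrightarrow> f ^ k \<in> pd n (a * k)"
proof (induction k)
  case 0 then show ?case by (simp add: pd_one)
next
  case (Suc k)
  then have "f * f ^ k \<in> pd n (a + a * k)" by (intro pd_mult) auto
  then show ?case by simp
qed

lemma pd_prod: "finite A \<Longrightarrow> (\<And>x. x \<in> A \<Longrightarrow> F x \<in> pd n (D x)) \<Longrightarrow> (\<Prod>x\<in>A. F x) \<in> pd n (\<Sum>x\<in>A. D x)"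
  by (induction A rule: finite_induct) (auto intro: pd_mult simp: pd_one)

lemma pd_subset_polys: "pd n d \<subseteq> polys n"
  by (auto simp: polys_deg_def)



lemma swp_swp [simp]: "swp i (swp i j) = j"
  by (simp add: swp_def)

lemma inj_swp: "inj (swp i)"
  by (metis injI swp_swp)

lemma swp_less: "Suc i < n \<Longrightarrow> swp i j < n \<longleftrightarrow> j < n"
  by (auto simp: swp_def)

lemma swp_o [simp]: "swp i \<circ> swp i = id"
  by (auto simp: fun_eq_iff)

lemma bij_swp: "bij (swp i)"
  by (metis bij_def inj_swp surjI swp_swp)

lemma inv_swp: "Hilbert_Choice.inv (swp i) = swp i"
  by (metis inj_swp inv_f_f swp_swp ext)

definition sw :: "nat \<Rightarrow> 'a list \<Rightarrow> 'a list" where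
  "sw i xs = map (\<lambda>j. xs ! swp i j) [0..<length xs]"

lemma length_sw [simp]: "length (sw i xs) = length xs"
  by (simp add: sw_def)

lemma nth_sw: "j < length xs \<Longrightarrow> sw i xs ! j = xs ! swp i j"
  by (simp add: sw_def)

lemma sw_sw: "Suc i < length xs \<Longrightarrow> sw i (sw i xs) = xs"
  by (rule nth_equalityI) (auto simp: nth_sw swp_less)

abbreviation sig :: "nat \<Rightarrow> (nat \<Rightarrow>\<^sub>0 nat) \<Rightarrow> (nat \<Rightarrow>\<^sub>0 nat)" where
  "sig i m \<equiv> Poly_Mapping.map_key (swp i) m"

lemma lookup_map_key_swp: "Poly_Mapping.lookup (Poly_Mapping.map_key (swp i) p) k = Poly_Mapping.lookup p (swp i k)"
  using inj_swp[of i] by (simp add: map_key.rep_eq)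

lemma sig_sig [simp]: "sig i (sig i m) = m"
  by (rule poly_mapping_eqI) (simp add: lookup_map_key_swp)

lemma inj_sig: "inj (sig i)"
  by (metis injI sig_sig)

lemma swp_image_iff: "x \<in> swp i ` A \<longleftrightarrow> swp i x \<in> A"
  by (metis imageI image_iff swp_swp)

lemma keys_sig: "Poly_Mapping.keys (sig i m) = swp i ` Poly_Mapping.keys m"
  by (auto simp: in_keys_iff lookup_map_key_swp swp_image_iff)

lemma lookup_swap_poly: "Poly_Mapping.lookup (swap_poly i f) m = Poly_Mapping.lookup f (sig i m)"
  unfolding swap_poly_def using inj_sig[of i] by (simp add: map_key.rep_eq)

lemma sig_image_iff: "x \<in> sig i ` A \<longleftrightarrow> sig i x \<in> A"
  by (metis imageI image_iff sig_sig)

lemma keys_swap_poly: "Poly_Mapping.keys (swap_poly i f) = sig i ` Poly_Mapping.keys f"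
  by (auto simp: in_keys_iff lookup_swap_poly sig_image_iff)

lemma mdeg_sig: "mdeg (sig i m) = mdeg m"
proof -
  have "mdeg (sig i m) = (\<Sum>k\<in>swp i ` Poly_Mapping.keys m. Poly_Mapping.lookup m (swp i k))"
    by (simp add: mdeg_def keys_sig lookup_map_key_swp)
  also have "\<dots> = mdeg m"
    by (subst sum.reindex) (auto simp: inj_on_def mdeg_def dest: inj_onD[OF inj_swp])
  finally show ?thesis .
qed

lemma mnm_sig:
  assumes "Poly_Mapping.keys m \<subseteq> {..<n}" "length v = n" "Suc i < n"
  shows "mnm (sig i m) v = mnm m (sw i v)"
proof -
  have "mnm (sig i m) v = (\<Prod>k\<in>swp i ` Poly_Mapping.keys m. (v ! k) ^ Poly_Mapping.lookup m (swp i k))"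
    by (simp add: mnm_def keys_sig lookup_map_key_swp)
  also have "\<dots> = (\<Prod>k\<in>Poly_Mapping.keys m. (v ! swp i k) ^ Poly_Mapping.lookup m k)"
    by (subst prod.reindex) (auto simp: inj_on_def dest: inj_onD[OF inj_swp])
  also have "\<dots> = mnm m (sw i v)"
    unfolding mnm_def using assms by (intro prod.cong) (auto simp: nth_sw)
  finally show ?thesis .
qed

lemma eval_swap_poly:
  assumes "f \<in> polys n" "length v = n" "Suc i < n"
  shows "eval (swap_poly i f) v = eval f (sw i v)"
proof -
  have "eval (swap_poly i f) v = (\<Sum>m\<in>sig i ` Poly_Mapping.keys f. Poly_Mapping.lookup f (sig i m) * mnm m v)"
    by (simp add: eval_alt keys_swap_poly lookup_swap_poly)
  also have "\<dots> = (\<Sum>m\<in>Poly_Mapping.keys f. Poly_Mapping.lookup f m * mnm (sig i m) v)"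
    by (subst sum.reindex) (auto simp: inj_on_def dest: inj_onD[OF inj_sig])
  also have "\<dots> = eval f (sw i v)"
    unfolding eval_alt using assms by (intro sum.cong) (auto simp: polys_def mnm_sig)
  finally show ?thesis .
qed

lemma keys_sig_sub: "Suc i < n \<Longrightarrow> Poly_Mapping.keys m \<subseteq> {..<n} \<Longrightarrow> Poly_Mapping.keys (sig i m) \<subseteq> {..<n}"
  by (auto simp: keys_sig swp_less)

lemma pd_swap_poly: "f \<in> pd n d \<Longrightarrow> Suc i < n \<Longrightarrow> swap_poly i f \<in> pd n d"
  unfolding pd_iff keys_swap_poly by (auto simp: mdeg_sig keys_sig_sub)

lemma swap_poly_add: "swap_poly i (f + g) = swap_poly i f + swap_poly i g"
  by (rule poly_mapping_eqI) (simp add: lookup_swap_poly lookup_add)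

lemma swap_poly_zero [simp]: "swap_poly i 0 = 0"
  by (rule poly_mapping_eqI) (simp add: lookup_swap_poly)

lemma swap_poly_sum: "swap_poly i (\<Sum>x\<in>A. F x) = (\<Sum>x\<in>A. swap_poly i (F x))"
  by (induction A rule: infinite_finite_induct) (auto simp: swap_poly_add)

lemma swap_poly_single: "swap_poly i (Poly_Mapping.single m c) = Poly_Mapping.single (sig i m) c"
  by (rule poly_mapping_eqI) (auto simp: lookup_swap_poly lookup_single when_def)

section \<open>Divided differences\<close>

definition Hq :: "nat \<Rightarrow> nat \<Rightarrow> nat \<Rightarrow> mpoly" where
  "Hq i a b = (if b \<le> a then (var i * var (Suc i)) ^ b * (\<Sum>j<a-b. var (Suc i) ^ (a - b - Suc j) * var i ^ j)
     else - ((var i * var (Suc i)) ^ a * (\<Sum>j<b-a. var (Suc i) ^ (b - a - Suc j) * var i ^ j)))"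

lemma Hq_eq: "(var i - var (Suc i)) * Hq i a b = var i ^ a * var (Suc i) ^ b - var i ^ b * var (Suc i) ^ a"
proof (cases "b \<le> a")
  case True
  then obtain k where a: "a = b + k" using le_Suc_ex by blast
  have "(var i - var (Suc i)) * Hq i a b = (var i * var (Suc i)) ^ b * ((var i - var (Suc i)) * (\<Sum>j<k. var (Suc i) ^ (k - Suc j) * var i ^ j))"
    using True by (simp add: Hq_def a mult_ac)
  also have "\<dots> = (var i * var (Suc i)) ^ b * (var i ^ k - var (Suc i) ^ k)"
    by (simp add: power_diff_sumr2)
  also have "\<dots> = var i ^ a * var (Suc i) ^ b - var i ^ b * var (Suc i) ^ a"
    by (simp add: a power_add power_mult_distrib algebra_simps)
  finally show ?thesis .
next
  case False
  then obtain k where a: "b = a + k" using le_Suc_ex nat_le_linear by blast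
  have "(var i - var (Suc i)) * Hq i a b = - ((var i * var (Suc i)) ^ a * ((var i - var (Suc i)) * (\<Sum>j<k. var (Suc i) ^ (k - Suc j) * var i ^ j)))"
    using False by (simp add: Hq_def a mult_ac)
  also have "\<dots> = - ((var i * var (Suc i)) ^ a * (var i ^ k - var (Suc i) ^ k))"
    by (simp add: power_diff_sumr2)
  also have "\<dots> = var i ^ a * var (Suc i) ^ b - var i ^ b * var (Suc i) ^ a"
    by (simp add: a power_add power_mult_distrib algebra_simps)
  finally show ?thesis .
qed

lemma Hq_same: "Hq i a a = 0"
  by (simp add: Hq_def)

lemma pd_Hq: "Suc i < n \<Longrightarrow> Hq i a b \<in> pd n (a + b - 1)"
proof -
  assume i: "Suc i < n"
  have X: "var i \<in> pd n 1" using i by (intro pd_var) auto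
  have Y: "var (Suc i) \<in> pd n 1" using i by (intro pd_var) auto
  have XY: "var i * var (Suc i) \<in> pd n (1+1)" by (rule pd_mult[OF X Y])
  have S: "(\<Sum>j<k. var (Suc i) ^ (k - Suc j) * var i ^ j) \<in> pd n (k - 1)" for k
  proof (rule pd_sum)
    fix j assume "j \<in> {..<k}"
    then have "var (Suc i) ^ (k - Suc j) * var i ^ j \<in> pd n (1 * (k - Suc j) + 1 * j)"
      by (intro pd_mult pd_power X Y)
    then show "var (Suc i) ^ (k - Suc j) * var i ^ j \<in> pd n (k - 1)"
      by (rule pd_mono) (use \<open>j \<in> {..<k}\<close> in auto)
  qed
  show ?thesis
  proof (cases "b \<le> a")
    case True
    have "(var i * var (Suc i)) ^ b * (\<Sum>j<a-b. var (Suc i) ^ (a - b - Suc j) * var i ^ j) \<in> pd n ((1+1) * b + (a - b - 1))"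
      by (intro pd_mult pd_power XY S)
    then show ?thesis using True
      by (cases "a = b") (auto simp: Hq_def Hq_same elim: pd_mono)
  next
    case False
    have "(var i * var (Suc i)) ^ a * (\<Sum>j<b-a. var (Suc i) ^ (b - a - Suc j) * var i ^ j) \<in> pd n ((1+1) * a + (b - a - 1))"
      by (intro pd_mult pd_power XY S)
    then show ?thesis using False
      by (auto simp: Hq_def intro!: pd_uminus elim: pd_mono)
  qed
qed

lemma single_power_var: "Poly_Mapping.single (Poly_Mapping.single i a) 1 = (var i) ^ a"
proof (induction a)
  case 0 then show ?case by simp
next
  case (Suc a)
  have "Poly_Mapping.single (Poly_Mapping.single i (Suc a)) (1::K) =
        Poly_Mapping.single (Poly_Mapping.single i 1 + Poly_Mapping.single i a) (1 * 1)"
    by (simp add: single_add[symmetric])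
  also have "\<dots> = var i * var i ^ a"
    by (simp only: mult_single[symmetric] Suc var_def)
  finally show ?case by simp
qed

definition Gm :: "nat \<Rightarrow> (nat \<Rightarrow>\<^sub>0 nat) \<Rightarrow> K \<Rightarrow> mpoly" where
  "Gm i m c = Poly_Mapping.single (m - Poly_Mapping.single i (Poly_Mapping.lookup m i) - Poly_Mapping.single (Suc i) (Poly_Mapping.lookup m (Suc i))) c
     * Hq i (Poly_Mapping.lookup m i) (Poly_Mapping.lookup m (Suc i))"

lemma Gm_eq: "(var i - var (Suc i)) * Gm i m c = Poly_Mapping.single m c - Poly_Mapping.single (sig i m) c"
proof -
  define a where "a = Poly_Mapping.lookup m i"
  define b where "b = Poly_Mapping.lookup m (Suc i)"
  define r where "r = m - Poly_Mapping.single i a - Poly_Mapping.single (Suc i) b"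
  have m: "m = r + Poly_Mapping.single i a + Poly_Mapping.single (Suc i) b"
    by (rule poly_mapping_eqI) (auto simp: r_def a_def b_def lookup_add lookup_minus lookup_single when_def)
  have sm: "sig i m = r + Poly_Mapping.single i b + Poly_Mapping.single (Suc i) a"
    by (rule poly_mapping_eqI) (auto simp: r_def a_def b_def lookup_add lookup_minus lookup_single when_def
        lookup_map_key_swp swp_def)
  have split: "Poly_Mapping.single (r + Poly_Mapping.single i x + Poly_Mapping.single (Suc i) y) c =
      Poly_Mapping.single r c * (var i ^ x * var (Suc i) ^ y)" for x y
    by (simp add: mult_single single_power_var[symmetric] mult.assoc add.assoc)
  have "(var i - var (Suc i)) * Gm i m c = Poly_Mapping.single r c * ((var i - var (Suc i)) * Hq i a b)"
    by (simp add: Gm_def a_def b_def r_def mult_ac)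
  also have "\<dots> = Poly_Mapping.single r c * (var i ^ a * var (Suc i) ^ b) - Poly_Mapping.single r c * (var i ^ b * var (Suc i) ^ a)"
    by (simp add: Hq_eq right_diff_distrib)
  also have "\<dots> = Poly_Mapping.single m c - Poly_Mapping.single (sig i m) c"
    unfolding split[symmetric] m[symmetric] sm[symmetric] by (rule refl)
  finally show ?thesis .
qed

lemma pd_Gm:
  assumes "Suc i < n" "Poly_Mapping.keys m \<subseteq> {..<n}"
  shows "Gm i m c \<in> pd n (mdeg m - 1)" "mdeg m = 0 \<Longrightarrow> Gm i m c = 0"
proof -
  define a where "a = Poly_Mapping.lookup m i"
  define b where "b = Poly_Mapping.lookup m (Suc i)"
  define r where "r = m - Poly_Mapping.single i a - Poly_Mapping.single (Suc i) b"
  have m: "m = r + Poly_Mapping.single i a + Poly_Mapping.single (Suc i) b"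
    by (rule poly_mapping_eqI) (auto simp: r_def a_def b_def lookup_add lookup_minus lookup_single when_def)
  have dm: "mdeg m = mdeg r + a + b"
    by (subst m) (simp add: mdeg_add)
  have "Poly_Mapping.lookup r x \<noteq> 0 \<Longrightarrow> Poly_Mapping.lookup m x \<noteq> 0" for x
    by (auto simp: r_def lookup_minus)
  then have kr: "Poly_Mapping.keys r \<subseteq> {..<n}"
  proof (intro subsetI)
    fix x assume h: "\<And>x. Poly_Mapping.lookup r x \<noteq> 0 \<Longrightarrow> Poly_Mapping.lookup m x \<noteq> 0"
      and x: "x \<in> Poly_Mapping.keys r"
    then have "x \<in> Poly_Mapping.keys m" by (simp add: in_keys_iff)
    then show "x \<in> {..<n}" using assms(2) by blast
  qed
  have "Gm i m c \<in> pd n (mdeg r + (a + b - 1))"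
    unfolding Gm_def a_def[symmetric] b_def[symmetric] r_def[symmetric]
    by (intro pd_mult pd_single pd_Hq assms kr) auto
  moreover have "a + b = 0 \<Longrightarrow> Gm i m c = 0"
    unfolding Gm_def a_def[symmetric] b_def[symmetric] r_def[symmetric] by (simp add: Hq_same)
  ultimately show "Gm i m c \<in> pd n (mdeg m - 1)"
    using dm by (cases "a + b = 0") (auto elim: pd_mono)
  show "mdeg m = 0 \<Longrightarrow> Gm i m c = 0"
    using \<open>a + b = 0 \<Longrightarrow> Gm i m c = 0\<close> dm by simp
qed

definition Dd :: "nat \<Rightarrow> mpoly \<Rightarrow> mpoly" where
  "Dd i f = (\<Sum>m\<in>Poly_Mapping.keys f. Gm i m (Poly_Mapping.lookup f m))"

lemma Dd_eq: "(var i - var (Suc i)) * Dd i f = f - swap_poly i f"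
proof -
  have "(var i - var (Suc i)) * Dd i f = (\<Sum>m\<in>Poly_Mapping.keys f. Poly_Mapping.single m (Poly_Mapping.lookup f m))
     - (\<Sum>m\<in>Poly_Mapping.keys f. swap_poly i (Poly_Mapping.single m (Poly_Mapping.lookup f m)))"
    by (simp add: Dd_def sum_distrib_left Gm_eq sum_subtractf swap_poly_single)
  also have "\<dots> = f - swap_poly i f"
    by (simp add: swap_poly_sum[symmetric] poly_expand[symmetric])
  finally show ?thesis .
qed

lemma var_diff_nz: "var i - var (Suc i) \<noteq> 0"
proof
  assume "var i - var (Suc i) = 0"
  then have "Poly_Mapping.lookup (var i - var (Suc i)) (Poly_Mapping.single i 1) = 0" by simp
  then show False
    by (simp add: var_def lookup_minus lookup_single when_def)
       (metis lookup_single_eq lookup_single_not_eq n_not_Suc_n one_neq_zero)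
qed

lemma ddiff_Dd: "ddiff i f = Dd i f"
  unfolding ddiff_def
proof (rule the_equality)
  show "(var i - var (Suc i)) * Dd i f = f - swap_poly i f" by (rule Dd_eq)
next
  fix g assume "(var i - var (Suc i)) * g = f - swap_poly i f"
  then have "(var i - var (Suc i)) * g = (var i - var (Suc i)) * Dd i f" by (simp add: Dd_eq)
  then show "g = Dd i f" using var_diff_nz by simp
qed

lemma ddiff_eq: "(var i - var (Suc i)) * ddiff i f = f - swap_poly i f"
  by (simp add: ddiff_Dd Dd_eq)

lemma pd_ddiff:
  assumes "f \<in> pd n d" "Suc i < n"
  shows "ddiff i f \<in> pd n (d - 1)" "d = 0 \<Longrightarrow> ddiff i f = 0"
proof -
  have km: "m \<in> Poly_Mapping.keys f \<Longrightarrow> Poly_Mapping.keys m \<subseteq> {..<n} \<and> mdeg m \<le> d" for m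
    using assms(1) by (auto simp: pd_iff)
  show "ddiff i f \<in> pd n (d - 1)"
    unfolding ddiff_Dd Dd_def
    by (intro pd_sum) (use km pd_Gm[OF assms(2)] in \<open>fastforce elim: pd_mono\<close>)
  show "d = 0 \<Longrightarrow> ddiff i f = 0"
    unfolding ddiff_Dd Dd_def
    by (intro sum.neutral) (use km pd_Gm(2)[OF assms(2)] in auto)
qed

lemma pd_Top:
  assumes "f \<in> pd n d" "Suc i < n"
  shows "Top i f \<in> pd n d"
proof (cases d)
  case 0
  then show ?thesis using pd_ddiff(2)[OF assms] assms by (simp add: Top_def pd_scal)
next
  case (Suc d')
  have "(scal tt (var i) - var (Suc i)) * ddiff i f \<in> pd n (1 + d')"
    using pd_ddiff(1)[OF assms] assms Suc
    by (intro pd_mult pd_diff pd_scal pd_var) auto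
  then show ?thesis using assms Suc
    by (simp add: Top_def pd_scal pd_diff)
qed

lemma eval_Top: "eval (Top i f) v = tt * eval f v - (tt * v ! i - v ! Suc i) * eval (ddiff i f) v"
  by (simp add: Top_def eval_diff eval_mult)

lemma eval_ddiff:
  assumes "f \<in> polys n" "length v = n" "Suc i < n"
  shows "(v ! i - v ! Suc i) * eval (ddiff i f) v = eval f v - eval f (sw i v)"
proof -
  have "eval ((var i - var (Suc i)) * ddiff i f) v = eval (f - swap_poly i f) v"
    by (simp add: ddiff_eq)
  then show ?thesis using assms by (simp add: eval_mult eval_diff eval_swap_poly)
qed

lemma pd_Tword: "f \<in> pd n d \<Longrightarrow> w \<in> words n \<Longrightarrow> Tword w f \<in> pd n d"
  by (induction w) (auto simp: Tword_def words_def intro: pd_Top)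



definition emb :: "rat poly poly \<Rightarrow> K" where "emb p = Fract p 1"

lemma emb_add: "emb (a + b) = emb a + emb b" by (simp add: emb_def)
lemma emb_mult: "emb (a * b) = emb a * emb b" by (simp add: emb_def)
lemma emb_0 [simp]: "emb 0 = 0" by (simp add: emb_def Zero_fract_def)
lemma emb_1 [simp]: "emb 1 = 1" by (simp add: emb_def One_fract_def)
lemma emb_inj: "emb a = emb b \<longleftrightarrow> a = b" by (simp add: emb_def eq_fract)
lemma emb_eq_0: "emb a = 0 \<longleftrightarrow> a = 0" using emb_inj[of a 0] by simp
lemma emb_power: "emb (a ^ k) = emb a ^ k" by (induction k) (auto simp: emb_mult)
lemma emb_sum: "emb (\<Sum>x\<in>A. F x) = (\<Sum>x\<in>A. emb (F x))"
  by (induction A rule: infinite_finite_induct) (auto simp: emb_add)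
lemma emb_prod: "emb (\<Prod>x\<in>A. F x) = (\<Prod>x\<in>A. emb (F x))"
  by (induction A rule: infinite_finite_induct) (auto simp: emb_mult)
lemma emb_uminus: "emb (- a) = - emb a" by (simp add: emb_def)
lemma emb_diff: "emb (a - b) = emb a - emb b" by (simp add: emb_def)

lemma qq_emb: "qq = emb [:[:0, 1:]:]" by (simp add: qq_def emb_def)
lemma tt_emb: "tt = emb [:0, 1:]" by (simp add: tt_def emb_def)

lemma tt_nz [simp]: "tt \<noteq> 0" by (simp add: tt_emb emb_eq_0)
lemma qq_nz [simp]: "qq \<noteq> 0" by (simp add: qq_emb emb_eq_0)

lemma qq_tt_pow: "qq ^ a * tt ^ k = emb (monom (monom 1 a) k)"
proof -
  have x1: "([:0, 1:] :: rat poly) = monom 1 1" by (simp add: monom_altdef)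
  have A: "([:[:0, 1:]:] :: rat poly poly) ^ a = [:monom 1 a:]"
    by (simp add: x1 poly_const_pow monom_power)
  have B: "([:0, 1:] :: rat poly poly) ^ k = monom 1 k" by (simp add: monom_altdef)
  show ?thesis
    by (simp add: qq_emb tt_emb emb_power[symmetric] emb_mult[symmetric] A B smult_monom)
qed

lemma qq_tt_inj: "qq ^ a * tt ^ k = qq ^ b * tt ^ l \<Longrightarrow> a = b \<and> k = l"
proof -
  assume "qq ^ a * tt ^ k = qq ^ b * tt ^ l"
  then have e: "monom (monom (1::rat) a) k = monom (monom 1 b) l"
    by (simp add: qq_tt_pow emb_inj)
  then have "coeff (monom (monom (1::rat) a) k) k = coeff (monom (monom 1 b) l) k" by simp
  then have kl: "k = l" by (cases "k = l") (auto simp: coeff_monom)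
  with e have "monom (1::rat) a = monom 1 b" by (simp add: monom_eq_iff)
  then have "coeff (monom (1::rat) a) a = coeff (monom 1 b) a" by simp
  then have "a = b" by (cases "a = b") (auto simp: coeff_monom)
  with kl show ?thesis by simp
qed

lemma qq_pow_inj: "qq ^ a = qq ^ b \<longleftrightarrow> a = b"
  using qq_tt_inj[of a 0 b 0] by auto

lemma qq_tt_neq:
  assumes "a \<noteq> b"
  shows "qq ^ a * inverse tt ^ k * tt ^ e \<noteq> qq ^ b * inverse tt ^ l"
proof
  assume h: "qq ^ a * inverse tt ^ k * tt ^ e = qq ^ b * inverse tt ^ l"
  have u: "inverse tt ^ k * tt ^ k = 1" "inverse tt ^ l * tt ^ l = 1"
    by (simp_all add: power_mult_distrib[symmetric])
  have "qq ^ a * tt ^ (l + e) = (qq ^ a * inverse tt ^ k * tt ^ e) * tt ^ k * tt ^ l"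
    by (simp add: power_add mult_ac u(1)[unfolded mult.commute[of "inverse tt ^ k"]]
          mult.left_commute[of "tt ^ k"])
  also have "\<dots> = qq ^ b * inverse tt ^ l * tt ^ k * tt ^ l"
    by (simp only: h)
  also have "\<dots> = qq ^ b * tt ^ k * (inverse tt ^ l * tt ^ l)"
    by (simp only: mult_ac)
  also have "\<dots> = qq ^ b * tt ^ k" by (simp add: u)
  finally show False using qq_tt_inj assms by blast
qed

lemma lookup_expo: "Poly_Mapping.lookup (expo mu) i = (if i < length mu then mu ! i else 0)"
  by (simp add: expo_def nth_default_def)

lemma keys_expo: "Poly_Mapping.keys (expo mu) \<subseteq> {..<length mu}"
  by (auto simp: in_keys_iff lookup_expo split: if_splits)

lemma mdeg_expo: "mdeg (expo mu) = sum_list mu"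
proof -
  have "mdeg (expo mu) = (\<Sum>i\<in>{..<length mu}. Poly_Mapping.lookup (expo mu) i)"
    by (rule mdeg_superset) (auto simp: keys_expo)
  also have "\<dots> = sum_list mu"
    by (simp add: lookup_expo sum_list_sum_nth atLeast0LessThan)
  finally show ?thesis .
qed

lemma expo_inj: "length mu = length nu \<Longrightarrow> expo mu = expo nu \<Longrightarrow> mu = nu"
proof (rule nth_equalityI)
  fix i assume "length mu = length nu" "expo mu = expo nu" "i < length mu"
  then show "mu ! i = nu ! i"
    using lookup_expo[of mu i] lookup_expo[of nu i] by simp
qed

lemma expo_surj:
  assumes "Poly_Mapping.keys k \<subseteq> {..<n}"
  shows "k = expo (map (Poly_Mapping.lookup k) [0..<n])"
  using assms by (intro poly_mapping_eqI) (auto simp: lookup_expo in_keys_iff)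

definition Del :: "nat \<Rightarrow> nat \<Rightarrow> nat list set" where
  "Del n d = {nu. length nu = n \<and> sum_list nu \<le> d}"

lemma finite_Del: "finite (Del n d)"
proof -
  have "Del n d \<subseteq> {xs. set xs \<subseteq> {0..d} \<and> length xs = n}"
    by (auto simp: Del_def dest: member_le_sum_list)
  then show ?thesis by (rule finite_subset) (rule finite_lists_length_eq, simp)
qed

lemma le_sum_eq:
  fixes mu nu :: "nat list"
  assumes "length mu = length nu" "\<forall>i<length mu. mu ! i \<le> nu ! i" "sum_list nu \<le> sum_list mu"
  shows "mu = nu"
proof (rule ccontr)
  assume "mu \<noteq> nu"
  then obtain i where i: "i < length mu" "mu ! i \<noteq> nu ! i" using assms(1) nth_equalityI by blast
  have "(\<Sum>j=0..<length mu. mu ! j) < (\<Sum>j=0..<length mu. nu ! j)"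
    using assms(2) i by (intro sum_strict_mono_ex1) (auto intro!: bexI[of _ i] le_neq_implies_less)
  then show False using assms by (simp add: sum_list_sum_nth)
qed

definition gpt :: "nat list \<Rightarrow> K list" where "gpt nu = map (\<lambda>x. qq ^ x) nu"

lemma length_tilde [simp]: "length (tilde nu) = length nu"
  by (simp add: tilde_def)

lemma nth_tilde: "j < length nu \<Longrightarrow> tilde nu ! j = qq ^ (nu ! j) * inverse tt ^ kk nu j"
  by (simp add: tilde_def)

definition KS :: "nat list \<Rightarrow> nat \<Rightarrow> nat set" where
  "KS mu j = {y. y < length mu \<and> y \<noteq> j \<and> ((y < j \<and> mu ! y > mu ! j) \<or> (j < y \<and> mu ! y \<ge> mu ! j))}"

lemma kk_KS: "j < length mu \<Longrightarrow> kk mu j = card (KS mu j)"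
proof -
  assume j: "j < length mu"
  have "KS mu j = {y. y < j \<and> mu ! y > mu ! j} \<union> {y. j < y \<and> y < length mu \<and> mu ! y \<ge> mu ! j}"
    using j by (auto simp: KS_def)
  moreover have "card (\<dots>) = card {y. y < j \<and> mu ! y > mu ! j} + card {y. j < y \<and> y < length mu \<and> mu ! y \<ge> mu ! j}"
    by (rule card_Un_disjoint) auto
  ultimately show ?thesis by (simp add: kk_def)
qed

lemma KS_sw:
  assumes "Suc i < length nu" "nu ! i \<noteq> nu ! Suc i" "j < length nu"
  shows "KS (sw i nu) j = swp i ` KS nu (swp i j)"
proof -
  have "y \<in> KS (sw i nu) j \<longleftrightarrow> swp i y \<in> KS nu (swp i j)" for y
  proof (cases "(y = i \<and> j = Suc i) \<or> (y = Suc i \<and> j = i)")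
    case True
    then show ?thesis using assms by (auto simp: KS_def nth_sw swp_def)
  next
    case False
    then have o1: "swp i y < swp i j \<longleftrightarrow> y < j" and o2: "swp i j < swp i y \<longleftrightarrow> j < y"
      and o3: "swp i y = swp i j \<longleftrightarrow> y = j"
      by (auto simp: swp_def)
    show ?thesis
      using assms o1 o2 o3 by (cases "y < length nu") (auto simp: KS_def nth_sw swp_less)
  qed
  then show ?thesis by (intro Set.set_eqI) (simp only: swp_image_iff)
qed

lemma kk_sw:
  assumes "Suc i < length nu" "nu ! i \<noteq> nu ! Suc i" "j < length nu"
  shows "kk (sw i nu) j = kk nu (swp i j)"
proof -
  have j': "swp i j < length nu" using assms swp_less by blast
  have "kk (sw i nu) j = card (KS (sw i nu) j)"
    using kk_KS[of j "sw i nu"] assms(3) by simp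
  also have "\<dots> = card (swp i ` KS nu (swp i j))"
    using KS_sw[OF assms] by simp
  also have "\<dots> = card (KS nu (swp i j))"
    using card_image[OF inj_on_subset[OF inj_swp subset_UNIV]] by blast
  also have "\<dots> = kk nu (swp i j)"
    using kk_KS[OF j'] by simp
  finally show ?thesis .
qed

lemma tilde_sw:
  assumes "Suc i < length nu" "nu ! i \<noteq> nu ! Suc i"
  shows "tilde (sw i nu) = sw i (tilde nu)"
  using assms by (intro nth_equalityI) (auto simp: nth_tilde nth_sw kk_sw swp_less)

lemma kk_eq:
  assumes "Suc i < length nu" "nu ! i = nu ! Suc i"
  shows "kk nu i = Suc (kk nu (Suc i))"
proof -
  have "y \<in> KS nu i \<longleftrightarrow> y \<in> insert (Suc i) (KS nu (Suc i))" for y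
    using assms by (cases "y < i"; cases "y = i"; cases "y = Suc i") (auto simp: KS_def)
  then have "KS nu i = insert (Suc i) (KS nu (Suc i))" by blast
  moreover have "Suc i \<notin> KS nu (Suc i)" by (simp add: KS_def)
  moreover have "finite (KS nu (Suc i))" by (simp add: KS_def)
  ultimately show ?thesis using assms by (simp add: kk_KS)
qed

lemma tilde_eq:
  assumes "Suc i < length nu" "nu ! i = nu ! Suc i"
  shows "tt * tilde nu ! i = tilde nu ! Suc i"
  using assms by (simp add: nth_tilde kk_eq field_simps)

lemma tilde_neq:
  assumes "Suc i < length nu" "nu ! i \<noteq> nu ! Suc i"
  shows "tilde nu ! i \<noteq> tilde nu ! Suc i" "tt * tilde nu ! i \<noteq> tilde nu ! Suc i"
proof -
  show "tilde nu ! i \<noteq> tilde nu ! Suc i"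
    using qq_tt_neq[OF assms(2), of "kk nu i" 0 "kk nu (Suc i)"] assms by (simp add: nth_tilde)
  show "tt * tilde nu ! i \<noteq> tilde nu ! Suc i"
    using qq_tt_neq[OF assms(2), of "kk nu i" 1 "kk nu (Suc i)"] assms by (simp add: nth_tilde mult_ac)
qed


section \<open>Newton polynomials and the grid\<close>

definition lead :: "nat \<Rightarrow> nat \<Rightarrow> (nat \<Rightarrow>\<^sub>0 nat) \<Rightarrow> mpoly \<Rightarrow> bool" where
  "lead n D M P \<longleftrightarrow> P - Poly_Mapping.single M 1 \<in> pd n (D - 1) \<and> (D = 0 \<longrightarrow> P = Poly_Mapping.single M 1)
     \<and> Poly_Mapping.keys M \<subseteq> {..<n} \<and> mdeg M = D"

lemma lead_one: "lead n 0 0 1"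
  by (simp add: lead_def)

lemma lead_lin: "i < n \<Longrightarrow> lead n 1 (Poly_Mapping.single i 1) (var i - mconst c)"
  by (simp add: lead_def var_def pd_uminus pd_mconst)

lemma lead_mult:
  assumes "lead n D M P" "lead n D' M' P'"
  shows "lead n (D + D') (M + M') (P * P')"
proof -
  define R where "R = P - Poly_Mapping.single M 1"
  define R' where "R' = P' - Poly_Mapping.single M' 1"
  have R: "R \<in> pd n (D - 1)" "D = 0 \<Longrightarrow> R = 0" and R': "R' \<in> pd n (D' - 1)" "D' = 0 \<Longrightarrow> R' = 0"
    using assms by (auto simp: lead_def R_def R'_def)
  have X: "Poly_Mapping.single M 1 \<in> pd n D" and X': "Poly_Mapping.single M' 1 \<in> pd n D'"
    using assms by (auto simp: lead_def intro!: pd_single)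
  have eq: "P * P' - Poly_Mapping.single (M + M') 1 =
      Poly_Mapping.single M 1 * R' + R * Poly_Mapping.single M' 1 + R * R'"
    by (simp add: R_def R'_def mult_single algebra_simps)
  have "Poly_Mapping.single M 1 * R' \<in> pd n (D + D' - 1)"
  proof (cases "D' = 0")
    case True then show ?thesis using R' by simp
  next
    case False then show ?thesis using pd_mult[OF X R'(1)] by (auto elim: pd_mono)
  qed
  moreover have "R * Poly_Mapping.single M' 1 \<in> pd n (D + D' - 1)"
  proof (cases "D = 0")
    case True then show ?thesis using R by simp
  next
    case False then show ?thesis using pd_mult[OF R(1) X'] by (auto elim: pd_mono)
  qed
  moreover have "R * R' \<in> pd n (D + D' - 1)"
  proof (cases "D = 0")
    case True then show ?thesis using R by simp
  next
    case False then show ?thesis using pd_mult[OF R(1) R'(1)] by (auto elim: pd_mono)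
  qed
  ultimately have "P * P' - Poly_Mapping.single (M + M') 1 \<in> pd n (D + D' - 1)"
    unfolding eq by (intro pd_add)
  moreover have "D + D' = 0 \<Longrightarrow> P * P' = Poly_Mapping.single (M + M') 1"
    using assms by (simp add: lead_def mult_single)
  ultimately show ?thesis using assms by (auto simp: lead_def keys_add_nat mdeg_add)
qed

lemma lead_prod:
  "finite A \<Longrightarrow> (\<And>x. x \<in> A \<Longrightarrow> lead n (D x) (M x) (P x)) \<Longrightarrow> lead n (\<Sum>x\<in>A. D x) (\<Sum>x\<in>A. M x) (\<Prod>x\<in>A. P x)"
  by (induction A rule: finite_induct) (auto intro: lead_mult lead_one)

lemma lead_coeff:
  assumes "lead n D M P" "mdeg k \<ge> D"
  shows "Poly_Mapping.lookup P k = (if k = M then 1 else 0)"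
proof (cases "D = 0")
  case True then show ?thesis using assms by (simp add: lead_def lookup_single when_def)
next
  case False
  have "P - Poly_Mapping.single M 1 \<in> pd n (D - 1)" using assms by (simp add: lead_def)
  have "k \<notin> Poly_Mapping.keys (P - Poly_Mapping.single M 1)"
  proof
    assume "k \<in> Poly_Mapping.keys (P - Poly_Mapping.single M 1)"
    then have "mdeg k \<le> D - 1" using \<open>P - Poly_Mapping.single M 1 \<in> pd n (D - 1)\<close> by (auto simp: pd_iff)
    then show False using assms(2) False by linarith
  qed
  then have "Poly_Mapping.lookup (P - Poly_Mapping.single M 1) k = 0" by (simp add: in_keys_iff)
  then show ?thesis by (auto simp: lookup_minus lookup_single when_def)
qed

lemma lead_pd: "lead n D M P \<Longrightarrow> P \<in> pd n D"
proof -
  assume l: "lead n D M P"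
  then have "P - Poly_Mapping.single M 1 + Poly_Mapping.single M 1 \<in> pd n D"
    by (intro pd_add pd_single) (auto simp: lead_def elim: pd_mono)
  then show ?thesis by simp
qed

definition Newt :: "nat list \<Rightarrow> mpoly" where
  "Newt mu = (\<Prod>i<length mu. \<Prod>j<mu ! i. var i - mconst (qq ^ j))"

lemma lead_Newt: "lead (length mu) (sum_list mu) (expo mu) (Newt mu)"
proof -
  have A: "lead (length mu) (\<Sum>i<length mu. \<Sum>j<mu ! i. 1) (\<Sum>i<length mu. \<Sum>j<mu ! i. Poly_Mapping.single i 1) (Newt mu)"
    unfolding Newt_def by (intro lead_prod lead_lin) auto
  have inner: "(\<Sum>j<m. Poly_Mapping.single i (1::nat)) = Poly_Mapping.single i m" for i m
    by (induction m) (simp_all add: single_add[symmetric])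
  have "(\<Sum>i<length mu. \<Sum>j<mu ! i. Poly_Mapping.single i (1::nat)) = (\<Sum>i<length mu. Poly_Mapping.single i (mu ! i))"
    by (intro sum.cong refl inner)
  also have "\<dots> = expo mu"
    by (rule poly_mapping_eqI) (auto simp: lookup_sum lookup_single when_def lookup_expo)
  finally have B: "(\<Sum>i<length mu. \<Sum>j<mu ! i. Poly_Mapping.single i (1::nat)) = expo mu" .
  have C: "(\<Sum>i<length mu. \<Sum>j<mu ! i. (1::nat)) = sum_list mu"
    by (simp add: sum_list_sum_nth atLeast0LessThan)
  show ?thesis using A unfolding B C .
qed

lemma eval_Newt:
  assumes "length nu = length mu"
  shows "eval (Newt mu) (gpt nu) = (\<Prod>i<length mu. \<Prod>j<mu ! i. qq ^ (nu ! i) - qq ^ j)"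
  using assms by (simp add: Newt_def eval_prod eval_diff gpt_def)

lemma eval_Newt_zero:
  assumes "length nu = length mu" "i < length mu" "nu ! i < mu ! i"
  shows "eval (Newt mu) (gpt nu) = 0"
proof -
  have "(\<Prod>j<mu ! i. qq ^ (nu ! i) - qq ^ j) = 0"
    using assms(3) by (intro prod_zero) (auto intro!: bexI[where x="nu ! i"])
  then show ?thesis
    unfolding eval_Newt[OF assms(1)] using assms(2) by (intro prod_zero) auto
qed

lemma eval_Newt_nz: "eval (Newt mu) (gpt mu) \<noteq> 0"
  unfolding eval_Newt[OF refl] by (auto simp: prod_zero_iff qq_pow_inj)

lemma Newt_vanish:
  assumes "length nu = length mu" "sum_list nu \<le> sum_list mu" "nu \<noteq> mu"
  shows "eval (Newt mu) (gpt nu) = 0"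
proof -
  have "\<not> (\<forall>i<length mu. mu ! i \<le> nu ! i)"
    using le_sum_eq[of mu nu] assms by auto
  then show ?thesis using eval_Newt_zero assms by (auto simp: not_le)
qed

lemma Del_split: "Del n (Suc d) = Del n d \<union> {mu. length mu = n \<and> sum_list mu = Suc d}"
  by (auto simp: Del_def)

lemma Newt_top:
  assumes f: "f \<in> pd n d"
  defines "T \<equiv> {mu. length mu = n \<and> sum_list mu = d}"
  shows "f - (\<Sum>mu\<in>T. scal (mcoeff f mu) (Newt mu)) \<in> pd n (d - 1)"
    and "d = 0 \<Longrightarrow> f = (\<Sum>mu\<in>T. scal (mcoeff f mu) (Newt mu))"
proof -
  define h where "h = (\<Sum>mu\<in>T. scal (mcoeff f mu) (Newt mu))"
  define g where "g = f - h"
  have finT: "finite T"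
    by (rule finite_subset[OF _ finite_Del[of n d]]) (auto simp: T_def Del_def)
  have NL: "mu \<in> T \<Longrightarrow> lead n d (expo mu) (Newt mu)" for mu
    using lead_Newt[of mu] by (auto simp: T_def)
  have hpd: "h \<in> pd n d"
    unfolding h_def by (intro pd_sum pd_scal lead_pd[OF NL])
  have gpd: "g \<in> pd n d" unfolding g_def by (intro pd_diff f hpd)
  have key: "Poly_Mapping.lookup g k = 0" if k: "mdeg k \<ge> d" for k
  proof -
    have "Poly_Mapping.lookup h k = (\<Sum>mu\<in>T. mcoeff f mu * (if k = expo mu then 1 else 0))"
      unfolding h_def lookup_sum lookup_scal
    proof (intro sum.cong refl)
      fix mu assume "mu \<in> T"
      then have "Poly_Mapping.lookup (Newt mu) k = (if k = expo mu then 1 else 0)"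
        by (intro lead_coeff[OF NL k])
      then show "mcoeff f mu * Poly_Mapping.lookup (Newt mu) k = mcoeff f mu * (if k = expo mu then 1 else 0)"
        by simp
    qed
    also have "\<dots> = (\<Sum>mu\<in>{mu\<in>T. k = expo mu}. mcoeff f mu)"
      unfolding sum.inter_filter[OF finT] by (intro sum.cong) auto
    finally have hk: "Poly_Mapping.lookup h k = (\<Sum>mu\<in>{mu\<in>T. k = expo mu}. mcoeff f mu)" .
    show ?thesis
    proof (cases "Poly_Mapping.keys k \<subseteq> {..<n} \<and> mdeg k = d")
      case True
      define mk where "mk = map (Poly_Mapping.lookup k) [0..<n]"
      have kmk: "k = expo mk" unfolding mk_def using True expo_surj by blast
      have lmk: "length mk = n" by (simp add: mk_def)
      have "sum_list mk = d" using True mdeg_expo[of mk] kmk by simp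
      then have mkT: "mk \<in> T" using lmk by (simp add: T_def)
      have "{mu\<in>T. k = expo mu} = {mk}"
      proof (intro Set.set_eqI iffI)
        fix mu assume "mu \<in> {mu\<in>T. k = expo mu}"
        then have "length mu = length mk" "expo mu = expo mk" using kmk lmk by (auto simp: T_def)
        then show "mu \<in> {mk}" using expo_inj by blast
      qed (use mkT kmk in blast)
      then have "Poly_Mapping.lookup h k = Poly_Mapping.lookup f k" using hk kmk by (simp add: mcoeff_def)
      then show ?thesis by (simp add: g_def lookup_minus)
    next
      case False
      have "{mu\<in>T. k = expo mu} = {}"
      proof (intro equals0I)
        fix mu assume "mu \<in> {mu\<in>T. k = expo mu}"
        then have "mu \<in> T" "k = expo mu" by auto
        then show False using False keys_expo[of mu] mdeg_expo[of mu] by (simp add: T_def)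
      qed
      then have h0: "Poly_Mapping.lookup h k = 0" using hk by (simp only: sum.empty)
      moreover have "Poly_Mapping.lookup f k = 0"
      proof (rule ccontr)
        assume "Poly_Mapping.lookup f k \<noteq> 0"
        then have "k \<in> Poly_Mapping.keys f" by (simp add: in_keys_iff)
        then have "Poly_Mapping.keys k \<subseteq> {..<n} \<and> mdeg k \<le> d" using f by (auto simp: pd_iff)
        then show False using False k by simp
      qed
      then show ?thesis using h0 by (simp add: g_def lookup_minus)
    qed
  qed
  have "g \<in> pd n (d - 1)"
    unfolding pd_iff
  proof
    fix m assume m: "m \<in> Poly_Mapping.keys g"
    then have "Poly_Mapping.keys m \<subseteq> {..<n} \<and> mdeg m \<le> d" using gpd by (auto simp: pd_iff)
    moreover have "\<not> mdeg m \<ge> d" using key m by (auto simp: in_keys_iff)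
    ultimately show "Poly_Mapping.keys m \<subseteq> {..<n} \<and> mdeg m \<le> d - 1" by auto
  qed
  then show "f - (\<Sum>mu\<in>T. scal (mcoeff f mu) (Newt mu)) \<in> pd n (d - 1)" by (simp add: g_def h_def)
  show "d = 0 \<Longrightarrow> f = (\<Sum>mu\<in>T. scal (mcoeff f mu) (Newt mu))"
  proof -
    assume "d = 0"
    then have "g = 0" using key by (intro poly_mapping_eqI) simp
    then show ?thesis by (simp add: g_def h_def)
  qed
qed

lemma Newt_span:
  assumes "f \<in> pd n d"
  shows "\<exists>c. f = (\<Sum>mu\<in>Del n d. scal (c mu) (Newt mu))"
  using assms
proof (induction d arbitrary: f)
  case (0 f)
  have "Del n 0 = {mu. length mu = n \<and> sum_list mu = 0}" by (auto simp: Del_def)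
  then show ?case using Newt_top(2)[OF "0.prems"] by auto
next
  case (Suc d f)
  define T where "T = {mu. length mu = n \<and> sum_list mu = Suc d}"
  define h where "h = (\<Sum>mu\<in>T. scal (mcoeff f mu) (Newt mu))"
  have "f - h \<in> pd n d" using Newt_top(1)[OF Suc.prems] by (simp add: h_def T_def)
  then obtain c where c: "f - h = (\<Sum>mu\<in>Del n d. scal (c mu) (Newt mu))" using Suc.IH by blast
  define c' where "c' mu = (if sum_list mu = Suc d then mcoeff f mu else c mu)" for mu
  have finT: "finite T"
    by (rule finite_subset[OF _ finite_Del[of n "Suc d"]]) (auto simp: T_def Del_def)
  have "(\<Sum>mu\<in>Del n (Suc d). scal (c' mu) (Newt mu)) =
        (\<Sum>mu\<in>Del n d. scal (c' mu) (Newt mu)) + (\<Sum>mu\<in>T. scal (c' mu) (Newt mu))"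
    unfolding Del_split T_def[symmetric]
    apply (rule sum.union_disjoint)
      apply (rule finite_Del)
     apply (rule finT)
    apply (auto simp: T_def Del_def)
    done
  also have "\<dots> = (f - h) + h"
  proof -
    have "(\<Sum>mu\<in>Del n d. scal (c' mu) (Newt mu)) = (\<Sum>mu\<in>Del n d. scal (c mu) (Newt mu))"
      by (intro sum.cong refl) (auto simp: c'_def Del_def)
    moreover have "(\<Sum>mu\<in>T. scal (c' mu) (Newt mu)) = h"
      unfolding h_def by (intro sum.cong refl) (auto simp: c'_def T_def)
    ultimately show ?thesis using c by simp
  qed
  finally show ?case by auto
qed

lemma grid_inj:
  assumes f: "f \<in> pd n d" and z: "\<forall>nu\<in>Del n d. eval f (gpt nu) = 0"
  shows "f = 0"
proof -
  obtain c where c: "f = (\<Sum>mu\<in>Del n d. scal (c mu) (Newt mu))" using Newt_span[OF f] by blast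
  have "\<forall>mu\<in>Del n d. c mu = 0"
  proof (rule ccontr)
    assume nz: "\<not> (\<forall>mu\<in>Del n d. c mu = 0)"
    define A where "A = {mu\<in>Del n d. c mu \<noteq> 0}"
    have A: "A \<noteq> {}" "finite A" using nz finite_Del by (auto simp: A_def)
    define s where "s = Min (sum_list ` A)"
    have "s \<in> sum_list ` A" unfolding s_def using A by (intro Min_in) auto
    then obtain mu0 where mu0: "mu0 \<in> A" "sum_list mu0 = s" by auto
    have smin: "mu \<in> A \<Longrightarrow> sum_list mu0 \<le> sum_list mu" for mu
      using A mu0 unfolding s_def by (auto intro: Min_le)
    have "eval f (gpt mu0) = (\<Sum>mu\<in>Del n d. c mu * eval (Newt mu) (gpt mu0))"
      by (simp add: c eval_sum)
    also have "\<dots> = c mu0 * eval (Newt mu0) (gpt mu0)"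
    proof -
      have "(\<Sum>mu\<in>Del n d - {mu0}. c mu * eval (Newt mu) (gpt mu0)) = 0"
      proof (rule sum.neutral, rule ballI)
        fix mu assume "mu \<in> Del n d - {mu0}"
        then show "c mu * eval (Newt mu) (gpt mu0) = 0"
          using smin[of mu] mu0 Newt_vanish[of mu0 mu] by (cases "c mu = 0") (auto simp: A_def Del_def)
      qed
      moreover have "mu0 \<in> Del n d" using mu0 by (simp add: A_def)
      ultimately show ?thesis using sum.remove[OF finite_Del, of mu0 n d "\<lambda>mu. c mu * eval (Newt mu) (gpt mu0)"] by simp
    qed
    finally have "c mu0 * eval (Newt mu0) (gpt mu0) = 0"
      using z mu0 by (simp add: A_def)
    then show False using eval_Newt_nz[of mu0] mu0 by (simp add: A_def)
  qed
  then show ?thesis by (simp add: c)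
qed

lemma grid_inj_exc:
  assumes mu: "length mu = n" and f: "f \<in> pd n (sum_list mu)" and c0: "mcoeff f mu = 0"
    and z: "\<forall>nu\<in>Del n (sum_list mu). nu \<noteq> mu \<longrightarrow> eval f (gpt nu) = 0"
  shows "f = 0"
proof -
  define a where "a = eval f (gpt mu)"
  define b where "b = eval (Newt mu) (gpt mu)"
  have b: "b \<noteq> 0" using eval_Newt_nz by (simp add: b_def)
  define H where "H = scal b f - scal a (Newt mu)"
  have L: "lead n (sum_list mu) (expo mu) (Newt mu)" using lead_Newt[of mu] mu by simp
  have Hpd: "H \<in> pd n (sum_list mu)"
    unfolding H_def by (intro pd_diff pd_scal f lead_pd[OF L])
  have "H = 0"
  proof (rule grid_inj[OF Hpd], intro ballI)
    fix nu assume nu: "nu \<in> Del n (sum_list mu)"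
    show "eval H (gpt nu) = 0"
    proof (cases "nu = mu")
      case True then show ?thesis by (simp add: H_def eval_diff a_def b_def mult.commute)
    next
      case False
      then show ?thesis using z nu Newt_vanish[of nu mu] mu
        by (simp add: H_def eval_diff Del_def)
    qed
  qed
  then have "Poly_Mapping.lookup H (expo mu) = 0" by simp
  moreover have "Poly_Mapping.lookup (Newt mu) (expo mu) = 1"
    using lead_coeff[OF L] by (simp add: mdeg_expo)
  ultimately have "a = 0" using c0 by (simp add: H_def lookup_minus lookup_scal mcoeff_def)
  then have "\<forall>nu\<in>Del n (sum_list mu). eval f (gpt nu) = 0"
    using z a_def by auto
  then show ?thesis using grid_inj[OF f] by blast
qed



section \<open>Specialisation t = 1\<close>

definition sexp :: "nat list \<Rightarrow> (nat \<Rightarrow>\<^sub>0 nat) \<Rightarrow> nat" where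
  "sexp nu m = (\<Sum>i\<in>Poly_Mapping.keys m. nu ! i * Poly_Mapping.lookup m i)"
definition texp :: "nat list \<Rightarrow> (nat \<Rightarrow>\<^sub>0 nat) \<Rightarrow> nat" where
  "texp nu m = (\<Sum>i\<in>Poly_Mapping.keys m. kk nu i * Poly_Mapping.lookup m i)"

lemma mnm_tilde:
  assumes "Poly_Mapping.keys m \<subseteq> {..<length nu}"
  shows "mnm m (tilde nu) = qq ^ sexp nu m * inverse tt ^ texp nu m"
proof -
  have "mnm m (tilde nu) = (\<Prod>i\<in>Poly_Mapping.keys m. qq ^ (nu ! i * Poly_Mapping.lookup m i) * inverse tt ^ (kk nu i * Poly_Mapping.lookup m i))"
    unfolding mnm_def using assms
    by (intro prod.cong refl) (auto simp: nth_tilde power_mult_distrib power_mult)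
  also have "\<dots> = qq ^ sexp nu m * inverse tt ^ texp nu m"
    by (simp add: prod.distrib sexp_def texp_def power_sum)
  finally show ?thesis .
qed

lemma mnm_gpt:
  assumes "Poly_Mapping.keys m \<subseteq> {..<length nu}"
  shows "mnm m (gpt nu) = qq ^ sexp nu m"
proof -
  have "mnm m (gpt nu) = (\<Prod>i\<in>Poly_Mapping.keys m. qq ^ (nu ! i * Poly_Mapping.lookup m i))"
    unfolding mnm_def using assms
    by (intro prod.cong refl) (auto simp: gpt_def power_mult)
  also have "\<dots> = qq ^ sexp nu m"
    by (simp add: sexp_def power_sum)
  finally show ?thesis .
qed

lemma Fract_zero: "Fract 0 b = (0 :: 'a :: idom fract)"
  by (cases "b = 0") (simp_all add: Zero_fract_def eq_fract)

lemma const_poly_sum: "[:(\<Sum>x\<in>A. g x):] = (\<Sum>x\<in>A. [:g x:])"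
proof (induction A rule: infinite_finite_induct)
  case (insert x F)
  have "[:g x + sum g F:] = [:g x:] + [:sum g F:]" by (simp add: add_pCons)
  then show ?case using insert by simp
qed auto

lemma special:
  assumes fp: "f \<in> polys n" and f0: "f \<noteq> 0"
  shows "\<exists>F. F \<noteq> 0 \<and> Poly_Mapping.keys F \<subseteq> Poly_Mapping.keys f \<and>
     (\<forall>nu. length nu = n \<longrightarrow> eval f (tilde nu) = 0 \<longrightarrow> eval F (gpt nu) = 0)"
proof -
  let ?K = "Poly_Mapping.keys f"
  have "\<exists>p. Poly_Mapping.lookup f m = Fract (fst p) (snd p) \<and> snd p \<noteq> 0" for m
    by (cases "Poly_Mapping.lookup f m") auto
  then obtain p where p: "\<And>m. Poly_Mapping.lookup f m = Fract (fst (p m)) (snd (p m)) \<and> snd (p m) \<noteq> 0"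
    by metis
  define A where "A m = fst (p m)" for m
  define B where "B m = snd (p m)" for m
  have AB: "Poly_Mapping.lookup f m = Fract (A m) (B m)" "B m \<noteq> 0" for m
    using p[of m] by (auto simp: A_def B_def)
  define D where "D = (\<Prod>m\<in>?K. B m)"
  have D0: "D \<noteq> 0" using AB(2) by (simp add: D_def)
  define P0 where "P0 m = A m * (\<Prod>m'\<in>?K - {m}. B m')" for m
  have fD: "Poly_Mapping.lookup f m * emb D = emb (P0 m)" if m: "m \<in> ?K" for m
  proof -
    have "D = B m * (\<Prod>m'\<in>?K - {m}. B m')"
      unfolding D_def using m by (simp add: prod.remove)
    then show ?thesis using AB[of m]
      by (simp add: emb_def P0_def eq_fract mult_ac)
  qed
  have P00: "P0 m \<noteq> 0" if m: "m \<in> ?K" for m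
  proof
    assume "P0 m = 0"
    then have "Poly_Mapping.lookup f m * emb D = 0" using fD[OF m] by simp
    then show False using m D0 by (simp add: in_keys_iff emb_eq_0)
  qed
  define e where "e = Min ((\<lambda>m. order 1 (P0 m)) ` ?K)"
  have Kne: "?K \<noteq> {}" using f0 by simp
  have "e \<in> (\<lambda>m. order 1 (P0 m)) ` ?K" unfolding e_def using Kne by (intro Min_in) auto
  then obtain ms where ms: "ms \<in> ?K" "order 1 (P0 ms) = e" by auto
  have emin: "m \<in> ?K \<Longrightarrow> e \<le> order 1 (P0 m)" for m
    unfolding e_def by (intro Min_le) auto
  define Q where "Q = ([:-1, 1:] :: rat poly poly) ^ e"
  have Q0: "Q \<noteq> 0" by (simp add: Q_def)
  define P where "P m = P0 m div Q" for m
  have QP: "P0 m = Q * P m" if "m \<in> ?K" for m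
  proof -
    have "Q dvd P0 m" unfolding Q_def using emin[OF that] by (simp add: order_divides)
    then show ?thesis by (simp add: P_def)
  qed
  have Pms: "poly (P ms) 1 \<noteq> 0"
  proof -
    have "order 1 (P0 ms) = order 1 Q + order 1 (P ms)"
      using QP[OF ms(1)] P00[OF ms(1)] by (simp add: order_mult)
    moreover have "order 1 Q = e" unfolding Q_def using order_power_n_n[of "1::rat poly" e] by simp
    ultimately have "order 1 (P ms) = 0" using ms by simp
    moreover have "P ms \<noteq> 0" using QP[OF ms(1)] P00[OF ms(1)] by auto
    ultimately show ?thesis by (simp add: order_root)
  qed
  define c where "c = emb D / emb Q"
  have fc: "Poly_Mapping.lookup f m * c = emb (P m)" if "m \<in> ?K" for m
  proof -
    have "emb Q \<noteq> 0" using Q0 by (simp add: emb_eq_0)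
    then show ?thesis using fD[OF that] QP[OF that]
      by (simp add: c_def emb_mult field_simps)
  qed
  define F where "F = (\<Sum>m\<in>?K. Poly_Mapping.single m (emb [:poly (P m) 1:]))"
  have lF: "Poly_Mapping.lookup F m = (if m \<in> ?K then emb [:poly (P m) 1:] else 0)" for m
    unfolding F_def lookup_sum by (simp add: lookup_single when_def)
  have keysF: "Poly_Mapping.keys F \<subseteq> ?K"
    by (auto simp: in_keys_iff lF split: if_splits)
  have F0: "F \<noteq> 0"
  proof
    assume "F = 0"
    then have "Poly_Mapping.lookup F ms = 0" by simp
    then show False using ms Pms by (simp add: lF emb_eq_0)
  qed
  have ev: "eval F (gpt nu) = 0" if nu: "length nu = n" and z: "eval f (tilde nu) = 0" for nu
  proof -
    have km: "m \<in> ?K \<Longrightarrow> Poly_Mapping.keys m \<subseteq> {..<length nu}" for m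
      using fp nu by (auto simp: polys_def)
    define N where "N = (\<Sum>m\<in>?K. texp nu m)"
    have tN: "m \<in> ?K \<Longrightarrow> texp nu m \<le> N" for m
      unfolding N_def by (rule member_le_sum) auto
    define T where "T = ([:0, 1:] :: rat poly poly)"
    define Qp where "Qp = ([:[:0, 1:]:] :: rat poly poly)"
    have "0 = c * eval f (tilde nu) * tt ^ N" using z by simp
    also have "\<dots> = (\<Sum>m\<in>?K. (Poly_Mapping.lookup f m * c) * (qq ^ sexp nu m * (inverse tt ^ texp nu m * tt ^ N)))"
      by (simp add: eval_alt sum_distrib_left sum_distrib_right mnm_tilde km mult_ac)
    also have "\<dots> = (\<Sum>m\<in>?K. emb (P m * Qp ^ sexp nu m * T ^ (N - texp nu m)))"
    proof (intro sum.cong refl)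
      fix m assume m: "m \<in> ?K"
      have "inverse tt ^ texp nu m * tt ^ N = tt ^ (N - texp nu m)"
      proof -
        have "tt ^ N = tt ^ texp nu m * tt ^ (N - texp nu m)"
          using tN[OF m] by (simp add: power_add[symmetric])
        then show ?thesis by (simp add: power_mult_distrib[symmetric] mult.assoc[symmetric])
      qed
      then show "(Poly_Mapping.lookup f m * c) * (qq ^ sexp nu m * (inverse tt ^ texp nu m * tt ^ N)) =
          emb (P m * Qp ^ sexp nu m * T ^ (N - texp nu m))"
        using fc[OF m] by (simp add: emb_mult emb_power qq_emb[symmetric] tt_emb[symmetric] Qp_def T_def)
    qed
    also have "\<dots> = emb (\<Sum>m\<in>?K. P m * Qp ^ sexp nu m * T ^ (N - texp nu m))"
      by (simp add: emb_sum)
    finally have "(\<Sum>m\<in>?K. P m * Qp ^ sexp nu m * T ^ (N - texp nu m)) = 0"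
      by (simp add: emb_eq_0)
    then have "poly (\<Sum>m\<in>?K. P m * Qp ^ sexp nu m * T ^ (N - texp nu m)) 1 = 0" by simp
    then have S0: "(\<Sum>m\<in>?K. poly (P m) 1 * [:0, 1:] ^ sexp nu m) = 0"
      by (simp add: poly_sum T_def Qp_def)
    have "eval F (gpt nu) = (\<Sum>m\<in>?K. Poly_Mapping.lookup F m * mnm m (gpt nu))"
      by (rule eval_superset) (auto simp: keysF)
    also have "\<dots> = (\<Sum>m\<in>?K. emb [:poly (P m) 1 * [:0, 1:] ^ sexp nu m:])"
    proof (intro sum.cong refl)
      fix m assume m: "m \<in> ?K"
      have "qq ^ sexp nu m = emb ([:[:0, 1:] ^ sexp nu m:])"
        by (simp add: qq_emb emb_power[symmetric] poly_const_pow)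
      then show "Poly_Mapping.lookup F m * mnm m (gpt nu) = emb [:poly (P m) 1 * [:0, 1:] ^ sexp nu m:]"
        using m by (simp add: lF mnm_gpt km emb_mult[symmetric] mult.commute)
    qed
    also have "\<dots> = emb [:(\<Sum>m\<in>?K. poly (P m) 1 * [:0, 1:] ^ sexp nu m):]"
      by (simp add: emb_sum const_poly_sum)
    also have "\<dots> = 0" by (simp add: S0)
    finally show ?thesis .
  qed
  show ?thesis using F0 keysF ev by blast
qed



section \<open>Interpolation\<close>

lemma pd_keys_sub: "f \<in> pd n d \<Longrightarrow> Poly_Mapping.keys F \<subseteq> Poly_Mapping.keys f \<Longrightarrow> F \<in> pd n d"
  unfolding pd_iff by blast

lemma interp_inj:
  assumes f: "f \<in> pd n d" and z: "\<forall>nu\<in>Del n d. eval f (tilde nu) = 0"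
  shows "f = 0"
proof (rule ccontr)
  assume "f \<noteq> 0"
  then obtain F where F: "F \<noteq> 0" "Poly_Mapping.keys F \<subseteq> Poly_Mapping.keys f"
    "\<forall>nu. length nu = n \<longrightarrow> eval f (tilde nu) = 0 \<longrightarrow> eval F (gpt nu) = 0"
    using special[of f n] f pd_subset_polys by blast
  have "F \<in> pd n d" using pd_keys_sub[OF f F(2)] .
  moreover have "\<forall>nu\<in>Del n d. eval F (gpt nu) = 0" using F(3) z by (auto simp: Del_def)
  ultimately have "F = 0" by (rule grid_inj)
  then show False using F(1) by simp
qed

lemma interp_inj_exc:
  assumes mu: "length mu = n" and f: "f \<in> pd n (sum_list mu)" and c0: "mcoeff f mu = 0"
    and z: "\<forall>nu\<in>Del n (sum_list mu). nu \<noteq> mu \<longrightarrow> eval f (tilde nu) = 0"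
  shows "f = 0"
proof (rule ccontr)
  assume "f \<noteq> 0"
  then obtain F where F: "F \<noteq> 0" "Poly_Mapping.keys F \<subseteq> Poly_Mapping.keys f"
    "\<forall>nu. length nu = n \<longrightarrow> eval f (tilde nu) = 0 \<longrightarrow> eval F (gpt nu) = 0"
    using special[of f n] f pd_subset_polys by blast
  have "F \<in> pd n (sum_list mu)" using pd_keys_sub[OF f F(2)] .
  moreover have "mcoeff F mu = 0"
    using c0 F(2) by (auto simp: mcoeff_def in_keys_iff)
  moreover have "\<forall>nu\<in>Del n (sum_list mu). nu \<noteq> mu \<longrightarrow> eval F (gpt nu) = 0" using F(3) z by (auto simp: Del_def)
  ultimately have "F = 0" using grid_inj_exc[OF mu] by blast
  then show False using F(1) by simp
qed

lemma Estar_exists: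
  assumes mu: "length mu = n"
  shows "\<exists>f\<in>pd n (sum_list mu). mcoeff f mu = 1 \<and>
     (\<forall>nu\<in>comps n. sum_list nu \<le> sum_list mu \<and> nu \<noteq> mu \<longrightarrow> eval f (tilde nu) = 0)"
proof -
  define d where "d = sum_list mu"
  obtain xs where xs: "set xs = Del n d" "distinct xs"
    using finite_distinct_list[OF finite_Del] by blast
  define N where "N = length xs"
  have muD: "mu \<in> set xs" using xs mu by (simp add: Del_def d_def)
  then obtain r0 where r0: "r0 < N" "xs ! r0 = mu" by (auto simp: in_set_conv_nth N_def)
  have xsl: "c < N \<Longrightarrow> length (xs ! c) = n \<and> sum_list (xs ! c) \<le> d" for c
    using xs(1) nth_mem[of c xs] by (auto simp: Del_def N_def)
  have xinj: "expo (xs ! c) = expo (xs ! c') \<longleftrightarrow> c = c'" if cc: "c < N" "c' < N" for c c'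
  proof
    assume "expo (xs ! c) = expo (xs ! c')"
    then have "xs ! c = xs ! c'" using expo_inj[of "xs ! c" "xs ! c'"] xsl[OF cc(1)] xsl[OF cc(2)] by simp
    then show "c = c'" using nth_eq_iff_index_eq[OF xs(2)] cc by (simp add: N_def)
  qed simp
  define A :: "K mat" where "A = mat N N (\<lambda>(r, c). if r = r0 then (if c = r0 then 1 else 0)
      else mnm (expo (xs ! c)) (tilde (xs ! r)))"
  define pv :: "K vec \<Rightarrow> mpoly" where "pv v = (\<Sum>c<N. Poly_Mapping.single (expo (xs ! c)) (v $ c))" for v
  have lpv: "Poly_Mapping.lookup (pv v) (expo (xs ! c)) = v $ c" if c: "c < N" for v c
  proof -
    have "Poly_Mapping.lookup (pv v) (expo (xs ! c)) = (\<Sum>c'<N. if c' = c then v $ c' else 0)"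
      unfolding pv_def lookup_sum
      by (intro sum.cong refl) (use xinj c in \<open>auto simp: lookup_single when_def\<close>)
    also have "\<dots> = v $ c" using c by simp
    finally show ?thesis .
  qed
  have epv: "eval (pv v) w = (\<Sum>c<N. v $ c * mnm (expo (xs ! c)) w)" for v w
    by (simp add: pv_def eval_sum eval_single)
  have pdpv: "pv v \<in> pd n d" for v
    unfolding pv_def
  proof (intro pd_sum pd_single)
    fix c assume "c \<in> {..<N}"
    then have "length (xs ! c) = n \<and> sum_list (xs ! c) \<le> d" using xsl by auto
    then show "Poly_Mapping.keys (expo (xs ! c)) \<subseteq> {..<n}" "mdeg (expo (xs ! c)) \<le> d"
      using keys_expo[of "xs ! c"] mdeg_expo[of "xs ! c"] by auto
  qed
  have Av: "(A *\<^sub>v v) $ r = (if r = r0 then mcoeff (pv v) mu else eval (pv v) (tilde (xs ! r)))"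
    if v: "v \<in> carrier_vec N" and r: "r < N" for v r
  proof -
    have "(A *\<^sub>v v) $ r = (\<Sum>c\<in>{0..<N}. A $$ (r, c) * v $ c)"
      using v r by (simp add: A_def scalar_prod_def)
    also have "\<dots> = (if r = r0 then v $ r0 else (\<Sum>c<N. v $ c * mnm (expo (xs ! c)) (tilde (xs ! r))))"
    proof (cases "r = r0")
      case True
      have "(\<Sum>c\<in>{0..<N}. A $$ (r, c) * v $ c) = (\<Sum>c\<in>{0..<N}. if c = r0 then v $ c else 0)"
        by (intro sum.cong refl) (use r True in \<open>simp add: A_def\<close>)
      then show ?thesis using True r0 by simp
    next
      case False
      have "(\<Sum>c\<in>{0..<N}. A $$ (r, c) * v $ c) = (\<Sum>c\<in>{0..<N}. v $ c * mnm (expo (xs ! c)) (tilde (xs ! r)))"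
        by (intro sum.cong refl) (use r False in \<open>simp add: A_def mult.commute\<close>)
      then show ?thesis using False by (simp add: atLeast0LessThan)
    qed
    also have "\<dots> = (if r = r0 then mcoeff (pv v) mu else eval (pv v) (tilde (xs ! r)))"
      using lpv[OF r0(1)] r0 by (simp add: mcoeff_def epv)
    finally show ?thesis .
  qed
  have AN: "A \<in> carrier_mat N N" by (simp add: A_def)
  have "det A \<noteq> 0"
  proof
    assume "det A = 0"
    then obtain v where v: "v \<in> carrier_vec N" "v \<noteq> 0\<^sub>v N" "A *\<^sub>v v = 0\<^sub>v N"
      using det_0_iff_vec_prod_zero_field[OF AN] by blast
    have z: "r < N \<Longrightarrow> (if r = r0 then mcoeff (pv v) mu else eval (pv v) (tilde (xs ! r))) = 0" for r
      using Av[OF v(1), of r] v(3) by simp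
    have "pv v = 0"
    proof (rule interp_inj_exc[OF mu])
      show "pv v \<in> pd n (sum_list mu)" using pdpv by (simp add: d_def)
      show "mcoeff (pv v) mu = 0" using z[OF r0(1)] by simp
      show "\<forall>nu\<in>Del n (sum_list mu). nu \<noteq> mu \<longrightarrow> eval (pv v) (tilde nu) = 0"
      proof (intro ballI impI)
        fix nu assume "nu \<in> Del n (sum_list mu)" "nu \<noteq> mu"
        then have "nu \<in> set xs" using xs(1) by (simp add: d_def)
        then obtain r where "r < N" "xs ! r = nu" by (auto simp: in_set_conv_nth N_def)
        moreover have "r \<noteq> r0" using calculation r0 \<open>nu \<noteq> mu\<close> by auto
        ultimately show "eval (pv v) (tilde nu) = 0" using z[of r] by auto
      qed
    qed
    then have "v $ c = 0" if "c < N" for c using lpv[OF that, of v] by simp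
    then have "v = 0\<^sub>v N" using v(1) by (intro eq_vecI) auto
    then show False using v(2) by simp
  qed
  then have "A \<in> Units (ring_mat TYPE(K) N ())"
    by (rule det_non_zero_imp_unit[OF AN])
  then obtain B where B: "B \<in> carrier_mat N N" "A * B = 1\<^sub>m N"
    by (auto simp: Units_def ring_mat_simps)
  define v where "v = B *\<^sub>v unit_vec N r0"
  have v: "v \<in> carrier_vec N" using B(1) by (simp add: v_def)
  have Ave: "A *\<^sub>v v = unit_vec N r0"
    using B AN by (simp add: v_def assoc_mult_mat_vec[symmetric])
  have vals: "r < N \<Longrightarrow> (if r = r0 then mcoeff (pv v) mu else eval (pv v) (tilde (xs ! r))) = (if r = r0 then 1 else 0)" for r
    using Av[OF v, of r] Ave r0 by simp
  show ?thesis
  proof (intro bexI conjI ballI impI)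
    show "pv v \<in> pd n (sum_list mu)" using pdpv by (simp add: d_def)
    show "mcoeff (pv v) mu = 1" using vals[OF r0(1)] by simp
    fix nu assume nu: "nu \<in> comps n" "sum_list nu \<le> sum_list mu \<and> nu \<noteq> mu"
    then have "nu \<in> set xs" using xs(1) by (simp add: Del_def comps_def d_def)
    then obtain r where "r < N" "xs ! r = nu" by (auto simp: in_set_conv_nth N_def)
    moreover have "r \<noteq> r0" using calculation r0 nu by auto
    ultimately show "eval (pv v) (tilde nu) = 0" using vals[of r] by auto
  qed
qed

lemma Estar_prop:
  assumes "length mu = n"
  shows "Estar mu \<in> pd n (sum_list mu)" "mcoeff (Estar mu) mu = 1"
    "\<And>nu. nu \<in> comps n \<Longrightarrow> sum_list nu \<le> sum_list mu \<Longrightarrow> nu \<noteq> mu \<Longrightarrow> eval (Estar mu) (tilde nu) = 0"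
proof -
  let ?P = "\<lambda>f. f \<in> polys_deg (length mu) (sum_list mu) \<and> mcoeff f mu = 1 \<and>
      (\<forall>nu \<in> comps (length mu). sum_list nu \<le> sum_list mu \<and> nu \<noteq> mu \<longrightarrow> eval f (tilde nu) = 0)"
  obtain f where f: "?P f" using Estar_exists[OF assms] assms by blast
  have uniq: "g = f" if g: "?P g" for g
  proof -
    have "g - f = 0"
    proof (rule interp_inj_exc[OF assms])
      show "g - f \<in> pd n (sum_list mu)" using f g assms by (auto intro: pd_diff)
      show "mcoeff (g - f) mu = 0" using f g by (simp add: mcoeff_def lookup_minus)
      show "\<forall>nu\<in>Del n (sum_list mu). nu \<noteq> mu \<longrightarrow> eval (g - f) (tilde nu) = 0"
      proof (intro ballI impI)
        fix nu assume nu: "nu \<in> Del n (sum_list mu)" "nu \<noteq> mu"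
        then have "nu \<in> comps (length mu)" "sum_list nu \<le> sum_list mu"
          using assms by (auto simp: Del_def comps_def)
        then show "eval (g - f) (tilde nu) = 0" using f g nu(2) by (simp add: eval_diff)
      qed
    qed
    then show ?thesis by simp
  qed
  have "?P (Estar mu)" unfolding Estar_def
    by (rule theI[where P="?P", OF f uniq])
  then show "Estar mu \<in> pd n (sum_list mu)" "mcoeff (Estar mu) mu = 1"
    "\<And>nu. nu \<in> comps n \<Longrightarrow> sum_list nu \<le> sum_list mu \<Longrightarrow> nu \<noteq> mu \<Longrightarrow> eval (Estar mu) (tilde nu) = 0"
    using assms by (auto simp: comps_def)
qed



section \<open>Words and inversions\<close>

fun invs :: "nat list \<Rightarrow> nat" where
  "invs [] = 0"
| "invs (x # xs) = length (filter (\<lambda>y. x < y) xs) + invs xs"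

lemma swp_Suc: "swp (Suc i) (Suc j) = Suc (swp i j)"
  by (simp add: swp_def)

lemma swp_Suc_0: "swp (Suc i) 0 = 0"
  by (simp add: swp_def)

lemma sw_Cons0: "sw 0 (x # y # zs) = y # x # zs"
proof (rule nth_equalityI)
  fix j assume "j < length (sw 0 (x # y # zs))"
  then show "sw 0 (x # y # zs) ! j = (y # x # zs) ! j"
    by (cases "j = 0"; cases "j = 1") (simp_all add: nth_sw swp_def nth_Cons')
qed simp

lemma sw_Cons: "Suc i < length xs \<Longrightarrow> sw (Suc i) (x # xs) = x # sw i xs"
proof (rule nth_equalityI)
  fix j assume "Suc i < length xs" "j < length (sw (Suc i) (x # xs))"
  then show "sw (Suc i) (x # xs) ! j = (x # sw i xs) ! j"
    by (cases j) (auto simp: nth_sw swp_Suc swp_Suc_0)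
qed simp

lemma sw_update: "Suc i < length xs \<Longrightarrow> sw i xs = xs[i := xs ! Suc i, Suc i := xs ! i]"
proof (rule nth_equalityI)
  fix j assume "Suc i < length xs" "j < length (sw i xs)"
  then show "sw i xs ! j = xs[i := xs ! Suc i, Suc i := xs ! i] ! j"
    by (cases "j = i"; cases "j = Suc i") (simp_all add: nth_sw swp_def nth_list_update)
qed simp

lemma mset_sw: "Suc i < length xs \<Longrightarrow> mset (sw i xs) = mset xs"
proof -
  assume a: "Suc i < length xs"
  have "mset (xs[Suc i := xs ! i, i := xs ! Suc i]) = mset xs"
    using a by (intro mset_swap) auto
  moreover have "xs[Suc i := xs ! i, i := xs ! Suc i] = xs[i := xs ! Suc i, Suc i := xs ! i]"
    by (rule list_update_swap) simp
  ultimately show ?thesis using a by (simp add: sw_update)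
qed

lemma sum_list_sw: "Suc i < length xs \<Longrightarrow> sum_list (sw i xs) = sum_list (xs :: nat list)"
  by (metis mset_sw sum_mset_sum_list)

lemma length_filter_mset: "mset xs = mset ys \<Longrightarrow> length (filter P xs) = length (filter P ys)"
  by (metis mset_filter size_mset)

lemma invs_sw:
  "Suc i < length xs \<Longrightarrow> invs (sw i xs) + (if xs ! i < xs ! Suc i then 1 else 0) =
     invs xs + (if xs ! Suc i < xs ! i then 1 else 0)"
proof (induction i arbitrary: xs)
  case 0
  then obtain x xs' where "xs = x # xs'" by (cases xs) auto
  moreover obtain y zs where "xs' = y # zs" using 0 calculation by (cases xs') auto
  ultimately have xs: "xs = x # y # zs" by simp
  show ?case by (simp add: xs sw_Cons0)
next
  case (Suc i)
  then obtain x xs' where xs: "xs = x # xs'" by (cases xs) auto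
  have l: "Suc i < length xs'" using Suc.prems xs by simp
  have "length (filter ((<) x) (sw i xs')) = length (filter ((<) x) xs')"
    by (rule length_filter_mset) (simp add: mset_sw l)
  then show ?case using Suc.IH[OF l] by (simp add: xs sw_Cons l)
qed

lemma invs_sw_le: "Suc i < length xs \<Longrightarrow> invs (sw i xs) \<le> Suc (invs xs)"
  using invs_sw[of i xs] by (auto split: if_splits)

lemma invs_zero_iff: "invs xs = 0 \<longleftrightarrow> sorted (rev xs)"
proof (induction xs)
  case (Cons x xs)
  have "invs (x # xs) = 0 \<longleftrightarrow> (\<forall>y\<in>set xs. \<not> x < y) \<and> invs xs = 0"
    by (simp add: filter_empty_conv)
  also have "\<dots> \<longleftrightarrow> sorted (rev (x # xs))"
    using Cons.IH by (auto simp: sorted_append not_less)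
  finally show ?case .
qed simp

lemma wperm_Cons: "wperm (i # w) = swp i \<circ> wperm w"
  by (simp add: wperm_def)

lemma wperm_Nil: "wperm [] = id"
  by (simp add: wperm_def)

lemma bij_wperm: "bij (wperm w)"
proof (induction w)
  case Nil then show ?case by (simp only: wperm_Nil bij_id)
next
  case (Cons i w) then show ?case unfolding wperm_Cons by (rule bij_comp[OF _ bij_swp])
qed

lemma length_act [simp]: "length (act s mu) = length mu"
  by (simp add: act_def)

lemma act_nil: "act (wperm []) lam = lam"
  by (simp add: act_def wperm_def map_nth)

lemma act_Cons:
  assumes "Suc i < length lam"
  shows "act (wperm (i # w)) lam = sw i (act (wperm w) lam)"
proof -
  have iv: "Hilbert_Choice.inv (swp i \<circ> wperm w) = Hilbert_Choice.inv (wperm w) \<circ> swp i"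
    by (simp add: o_inv_distrib bij_swp bij_wperm inv_swp)
  show ?thesis
  proof (rule nth_equalityI)
    fix j assume j: "j < length (act (wperm (i # w)) lam)"
    then have j': "swp i j < length lam" using assms swp_less by simp
    show "act (wperm (i # w)) lam ! j = sw i (act (wperm w) lam) ! j"
      using j j' by (simp add: act_def wperm_Cons iv nth_sw)
  qed simp
qed

lemma act_rearr:
  assumes "w \<in> words (length lam)"
  shows "act (wperm w) lam \<in> rearr lam"
  using assms
proof (induction w)
  case Nil then show ?case by (simp add: act_nil rearr_def)
next
  case (Cons i w)
  then have i: "Suc i < length lam" and w: "w \<in> words (length lam)" by (auto simp: words_def)
  show ?case using Cons.IH[OF w] i by (simp add: act_Cons rearr_def mset_sw)
qed

lemma act_invs:
  assumes "w \<in> words (length lam)"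
  shows "invs (act (wperm w) lam) \<le> length w + invs lam"
  using assms
proof (induction w)
  case Nil then show ?case by (simp add: act_nil)
next
  case (Cons i w)
  then have i: "Suc i < length lam" and w: "w \<in> words (length lam)" by (auto simp: words_def)
  show ?case using Cons.IH[OF w] i invs_sw_le[of i "act (wperm w) lam"] by (simp add: act_Cons)
qed

lemma partition_invs: "is_partition lam \<Longrightarrow> invs lam = 0"
  by (simp add: is_partition_def invs_zero_iff)

lemma rearr_partition_eq:
  assumes "is_partition lam" "mu \<in> rearr lam" "sorted (rev mu)"
  shows "mu = lam"
proof -
  have "sort (rev lam) = rev mu"
    using assms by (intro properties_for_sort) (auto simp: rearr_def)
  moreover have "sort (rev lam) = rev lam"
    using assms by (intro properties_for_sort) (auto simp: is_partition_def)
  ultimately show ?thesis by simp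
qed

lemma word_exists:
  assumes "is_partition lam" "mu \<in> rearr lam"
  shows "\<exists>w\<in>words (length lam). act (wperm w) lam = mu \<and> length w = invs mu"
  using assms(2)
proof (induction "invs mu" arbitrary: mu)
  case 0
  then have "sorted (rev mu)" using invs_zero_iff by simp
  then have "mu = lam" using rearr_partition_eq[OF assms(1) "0.prems"] by simp
  then show ?case using partition_invs[OF assms(1)] by (intro bexI[of _ "[]"]) (auto simp: act_nil words_def)
next
  case (Suc k mu)
  have lmu: "length mu = length lam" using Suc.prems by (simp add: rearr_def)
  have "invs mu \<noteq> 0" using Suc.hyps(2) by linarith
  then have "\<not> sorted (rev mu)" by (simp add: invs_zero_iff)
  then obtain i where i: "Suc i < length mu" "mu ! i < mu ! Suc i"
    by (auto simp: sorted_rev_iff_nth_Suc not_le)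
  define mu' where "mu' = sw i mu"
  have "invs mu' = k" using invs_sw[OF i(1)] i(2) Suc.hyps(2) by (simp add: mu'_def)
  moreover have "mu' \<in> rearr lam" using Suc.prems i by (simp add: mu'_def rearr_def mset_sw)
  ultimately have "\<exists>w\<in>words (length lam). act (wperm w) lam = mu' \<and> length w = invs mu'"
    using Suc.hyps(1)[of mu'] by simp
  then obtain w where w: "w \<in> words (length lam)" "act (wperm w) lam = mu'" "length w = k"
    using \<open>invs mu' = k\<close> by blast
  have "act (wperm (i # w)) lam = mu" using i lmu w by (simp add: act_Cons mu'_def sw_sw)
  moreover have "i # w \<in> words (length lam)" using w i lmu by (simp add: words_def)
  ultimately show ?case using w Suc.hyps(2) by (intro bexI[of _ "i # w"]) auto
qed

lemma redword_prop:
  assumes "is_partition lam" "mu \<in> rearr lam"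
  shows "redword lam mu \<in> words (length lam)" "act (wperm (redword lam mu)) lam = mu"
    "length (redword lam mu) = invs mu"
proof -
  let ?Q = "\<lambda>w. w \<in> words (length lam) \<and> act (wperm w) lam = mu"
  obtain w0 where w0: "?Q w0" "length w0 = invs mu" using word_exists[OF assms] by blast
  obtain w where w: "?Q w" "\<forall>w'. ?Q w' \<longrightarrow> length w \<le> length w'"
    using ex_has_least_nat[of ?Q w0 length] w0 by blast
  define R where "R = (\<lambda>w. w \<in> words (length lam) \<and> act (wperm w) lam = mu \<and>
      (\<forall>w' \<in> words (length lam). act (wperm w') lam = mu \<longrightarrow> length w \<le> length w'))"
  have "R w" using w by (auto simp: R_def)
  then have "R (Eps R)" by (rule someI)
  moreover have "redword lam mu = Eps R" by (simp add: redword_def R_def)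
  ultimately have "R (redword lam mu)" by simp
  then have r: "?Q (redword lam mu)" "length (redword lam mu) \<le> length w0" using w0 by (auto simp: R_def)
  then show "redword lam mu \<in> words (length lam)" "act (wperm (redword lam mu)) lam = mu" by auto
  have "invs mu \<le> length (redword lam mu)"
    using act_invs[of "redword lam mu" lam] r partition_invs[OF assms(1)] by simp
  then show "length (redword lam mu) = invs mu" using r w0 by simp
qed

lemma sort_rearr:
  assumes "is_partition lam" "mu \<in> rearr lam"
  shows "rev (sort mu) = lam"
proof -
  have "sort mu = rev lam"
    using assms by (intro properties_for_sort) (auto simp: rearr_def is_partition_def)
  then show ?thesis by simp
qed

lemma fstar_eq:
  assumes "is_partition lam" "mu \<in> rearr lam"
  shows "fstar mu = Tword (redword lam mu) (Estar lam)"
  using sort_rearr[OF assms] by (simp add: fstar_def)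

lemma partition_sort: "is_partition (rev (sort mu))"
  by (simp add: is_partition_def)

lemma rearr_sort: "mu \<in> rearr (rev (sort mu))"
  by (simp add: rearr_def)



lemma Vstar_iff: "f \<in> Vstar lam \<longleftrightarrow> f \<in> pd (length lam) (sum_list lam) \<and>
   (\<forall>nu\<in>comps (length lam). sum_list nu \<le> sum_list lam \<and> nu \<notin> rearr lam \<longrightarrow> eval f (tilde nu) = 0)"
  by (simp add: Vstar_def)

lemma Vstar_zero: "0 \<in> Vstar lam" by (simp add: Vstar_iff)

lemma Vstar_diff: "f \<in> Vstar lam \<Longrightarrow> g \<in> Vstar lam \<Longrightarrow> f - g \<in> Vstar lam"
  by (simp add: Vstar_iff pd_diff eval_diff)

lemma Vstar_add: "f \<in> Vstar lam \<Longrightarrow> g \<in> Vstar lam \<Longrightarrow> f + g \<in> Vstar lam"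
  by (simp add: Vstar_iff pd_add eval_add)

lemma Vstar_scal: "f \<in> Vstar lam \<Longrightarrow> scal c f \<in> Vstar lam"
  by (simp add: Vstar_iff pd_scal)

lemma Vstar_sum: "(\<And>x. x \<in> A \<Longrightarrow> F x \<in> Vstar lam) \<Longrightarrow> (\<Sum>x\<in>A. F x) \<in> Vstar lam"
  by (induction A rule: infinite_finite_induct) (auto intro: Vstar_add Vstar_zero)

lemma Estar_Vstar: "Estar lam \<in> Vstar lam"
  using Estar_prop[of lam "length lam"] by (auto simp: Vstar_iff rearr_def)

lemma Top_zero:
  assumes f: "f \<in> polys n" and nu: "length nu = n" and i: "Suc i < n"
    and z1: "eval f (tilde nu) = 0"
    and z2: "nu ! i \<noteq> nu ! Suc i \<Longrightarrow> eval f (tilde (sw i nu)) = 0"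
  shows "eval (Top i f) (tilde nu) = 0"
proof (cases "nu ! i = nu ! Suc i")
  case True
  then have "tt * tilde nu ! i - tilde nu ! Suc i = 0" using tilde_eq[of i nu] nu i by simp
  then show ?thesis by (simp add: eval_Top z1)
next
  case False
  have "(tilde nu ! i - tilde nu ! Suc i) * eval (ddiff i f) (tilde nu) = eval f (tilde nu) - eval f (sw i (tilde nu))"
    using eval_ddiff[OF f _ i, of "tilde nu"] nu by simp
  also have "\<dots> = 0" using z1 z2[OF False] tilde_sw[of i nu] nu i False by simp
  finally have "eval (ddiff i f) (tilde nu) = 0"
    using tilde_neq(1)[of i nu] nu i False by simp
  then show ?thesis by (simp add: eval_Top z1)
qed

lemma Top_nz:
  assumes f: "f \<in> polys n" and nu: "length nu = n" and i: "Suc i < n"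
    and lt: "nu ! i \<noteq> nu ! Suc i"
    and z1: "eval f (tilde nu) = 0" and nz: "eval f (tilde (sw i nu)) \<noteq> 0"
  shows "eval (Top i f) (tilde nu) \<noteq> 0"
proof -
  have "(tilde nu ! i - tilde nu ! Suc i) * eval (ddiff i f) (tilde nu) = eval f (tilde nu) - eval f (sw i (tilde nu))"
    using eval_ddiff[OF f _ i, of "tilde nu"] nu by simp
  also have "\<dots> = - eval f (tilde (sw i nu))" using z1 tilde_sw[of i nu] nu i lt by simp
  finally have "eval (ddiff i f) (tilde nu) \<noteq> 0" using nz by auto
  moreover have "tt * tilde nu ! i - tilde nu ! Suc i \<noteq> 0" using tilde_neq(2)[of i nu] nu i lt by simp
  ultimately show ?thesis by (simp add: eval_Top z1)
qed

lemma Top_Vstar: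
  assumes f: "f \<in> Vstar lam" and i: "Suc i < length lam"
  shows "Top i f \<in> Vstar lam"
  unfolding Vstar_iff
proof (intro conjI ballI impI)
  have fp: "f \<in> pd (length lam) (sum_list lam)" using f by (simp add: Vstar_iff)
  then show "Top i f \<in> pd (length lam) (sum_list lam)" using i by (rule pd_Top)
  fix nu assume nu: "nu \<in> comps (length lam)" "sum_list nu \<le> sum_list lam \<and> nu \<notin> rearr lam"
  show "eval (Top i f) (tilde nu) = 0"
  proof (rule Top_zero[OF _ _ i])
    show "f \<in> polys (length lam)" using fp pd_subset_polys by blast
    show "length nu = length lam" using nu by (simp add: comps_def)
    show "eval f (tilde nu) = 0" using f nu by (simp add: Vstar_iff)
    have l: "Suc i < length nu" using nu i by (simp add: comps_def)
    have "sw i nu \<in> comps (length lam)" "sum_list (sw i nu) \<le> sum_list lam" "sw i nu \<notin> rearr lam"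
      using nu l by (auto simp: comps_def sum_list_sw rearr_def mset_sw)
    then show "eval f (tilde (sw i nu)) = 0" using f by (simp add: Vstar_iff)
  qed
qed

lemma Tword_Vstar: "f \<in> Vstar lam \<Longrightarrow> w \<in> words (length lam) \<Longrightarrow> Tword w f \<in> Vstar lam"
  by (induction w) (auto simp: Tword_def words_def intro: Top_Vstar)

section \<open>Triangularity\<close>

lemma Estar_diag:
  assumes "length lam = n"
  shows "eval (Estar lam) (tilde lam) \<noteq> 0"
proof
  assume z: "eval (Estar lam) (tilde lam) = 0"
  have "Estar lam = 0"
  proof (rule interp_inj[OF Estar_prop(1)[OF assms]], intro ballI)
    fix nu assume "nu \<in> Del n (sum_list lam)"
    then show "eval (Estar lam) (tilde nu) = 0"
      using z Estar_prop(3)[OF assms, of nu] by (cases "nu = lam") (auto simp: Del_def comps_def)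
  qed
  then show False using Estar_prop(2)[OF assms] by (simp add: mcoeff_def)
qed

lemma triangular_aux:
  assumes lam: "is_partition lam" "length lam = n"
  shows "w \<in> words n \<Longrightarrow> length w = invs (act (wperm w) lam) \<Longrightarrow>
    eval (Tword w (Estar lam)) (tilde (act (wperm w) lam)) \<noteq> 0 \<and>
    (\<forall>nu. nu \<in> rearr lam \<and> nu \<noteq> act (wperm w) lam \<and> invs (act (wperm w) lam) \<le> invs nu \<longrightarrow>
       eval (Tword w (Estar lam)) (tilde nu) = 0)"
proof (induction w)
  case Nil
  have "eval (Estar lam) (tilde nu) = 0" if "nu \<in> rearr lam" "nu \<noteq> lam" for nu
    using that Estar_prop(3)[OF lam(2), of nu] lam(2)
    by (auto simp: rearr_def comps_def sum_mset_sum_list[symmetric])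
  then show ?case using Estar_diag[OF lam(2)] by (auto simp: Tword_def act_nil)
next
  case (Cons i w)
  have i: "Suc i < n" and ww: "w \<in> words n" using Cons.prems by (auto simp: words_def)
  define mu' where "mu' = act (wperm w) lam"
  have mu: "act (wperm (i # w)) lam = sw i mu'" using i lam by (simp add: act_Cons mu'_def)
  have lmu': "length mu' = n" using lam by (simp add: mu'_def)
  have mu'O: "mu' \<in> rearr lam" using act_rearr[of w lam] ww lam by (simp add: mu'_def)
  have le: "invs mu' \<le> length w"
    using act_invs[of w lam] ww lam partition_invs[OF lam(1)] by (simp add: mu'_def)
  have sweq: "invs (sw i mu') + (if mu' ! i < mu' ! Suc i then 1 else 0) =
      invs mu' + (if mu' ! Suc i < mu' ! i then 1 else 0)"
    using invs_sw[of i mu'] i lmu' by simp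
  have len: "invs (sw i mu') = Suc (length w)" using Cons.prems(2) mu by simp
  have gt: "mu' ! Suc i < mu' ! i" and eqw: "invs mu' = length w"
    using sweq len le by (auto split: if_splits)
  have IH: "eval (Tword w (Estar lam)) (tilde mu') \<noteq> 0 \<and>
    (\<forall>nu. nu \<in> rearr lam \<and> nu \<noteq> mu' \<and> invs mu' \<le> invs nu \<longrightarrow> eval (Tword w (Estar lam)) (tilde nu) = 0)"
    using Cons.IH[OF ww] eqw by (simp add: mu'_def)
  have IH1: "eval (Tword w (Estar lam)) (tilde mu') \<noteq> 0" using IH by simp
  have IH2: "\<And>nu. nu \<in> rearr lam \<Longrightarrow> nu \<noteq> mu' \<Longrightarrow> invs mu' \<le> invs nu \<Longrightarrow>
       eval (Tword w (Estar lam)) (tilde nu) = 0" using IH by simp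
  define g where "g = Tword w (Estar lam)"
  have gp: "g \<in> polys n"
    using pd_Tword[OF Estar_prop(1)[OF lam(2)] ww] pd_subset_polys by (auto simp: g_def)
  have TW: "Tword (i # w) (Estar lam) = Top i g" by (simp add: Tword_def g_def)
  have swmu: "sw i (sw i mu') = mu'" using i lmu' by (simp add: sw_sw)
  have lsw: "length (sw i mu') = n" using lmu' by simp
  have neq: "sw i mu' ! i \<noteq> sw i mu' ! Suc i" using gt i lmu' by (simp add: nth_sw swp_def)
  have swO: "sw i mu' \<in> rearr lam" using mu'O i lmu' by (simp add: rearr_def mset_sw)
  have swne: "sw i mu' \<noteq> mu'"
  proof
    assume "sw i mu' = mu'"
    then have "sw i mu' ! i = mu' ! i" by simp
    then show False using gt i lmu' by (simp add: nth_sw swp_def)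
  qed
  have part1: "eval (Top i g) (tilde (sw i mu')) \<noteq> 0"
  proof (rule Top_nz[OF gp lsw i neq])
    show "eval g (tilde (sw i mu')) = 0"
      unfolding g_def using IH2[OF swO swne] len eqw by simp
    show "eval g (tilde (sw i (sw i mu'))) \<noteq> 0" unfolding swmu g_def by (rule IH1)
  qed
  have part2: "eval (Top i g) (tilde nu) = 0"
    if nu: "nu \<in> rearr lam" "nu \<noteq> sw i mu'" "invs (sw i mu') \<le> invs nu" for nu
  proof -
    have lnu: "length nu = n" using nu lam by (simp add: rearr_def)
    show ?thesis
    proof (rule Top_zero[OF gp lnu i])
      have "nu \<noteq> mu'" using nu(3) len eqw by auto
      then show "eval g (tilde nu) = 0" unfolding g_def using IH2 nu len eqw by simp
      assume nneq: "nu ! i \<noteq> nu ! Suc i"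
      have swnuO: "sw i nu \<in> rearr lam" using nu i lnu by (simp add: rearr_def mset_sw)
      have "sw i nu \<noteq> mu'"
      proof
        assume "sw i nu = mu'"
        then have "nu = sw i mu'" using sw_sw[of i nu] i lnu by simp
        then show False using nu(2) by simp
      qed
      moreover have "invs mu' \<le> invs (sw i nu)"
        using invs_sw[of i nu] i lnu nu(3) len eqw by (auto split: if_splits)
      ultimately show "eval g (tilde (sw i nu)) = 0" unfolding g_def using IH2 swnuO by simp
    qed
  qed
  show ?case unfolding mu TW using part1 part2 by blast
qed

lemma fstar_diag:
  assumes "is_partition lam" "mu \<in> rearr lam"
  shows "eval (fstar mu) (tilde mu) \<noteq> 0"
    "\<And>nu. nu \<in> rearr lam \<Longrightarrow> nu \<noteq> mu \<Longrightarrow> invs mu \<le> invs nu \<Longrightarrow> eval (fstar mu) (tilde nu) = 0"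
  using triangular_aux[OF assms(1) refl, of "redword lam mu"] redword_prop[OF assms] fstar_eq[OF assms]
  by auto



lemma rearr_sub_Del: "rearr lam \<subseteq> Del (length lam) (sum_list lam)"
  by (auto simp: rearr_def Del_def sum_mset_sum_list[symmetric])

lemma finite_rearr: "finite (rearr lam)"
  using finite_subset[OF rearr_sub_Del finite_Del] .

lemma fstar_Vstar:
  assumes "is_partition lam" "mu \<in> rearr lam"
  shows "fstar mu \<in> Vstar lam"
  using Tword_Vstar[OF Estar_Vstar redword_prop(1)[OF assms]] fstar_eq[OF assms] by simp

lemma match:
  assumes lam: "is_partition lam"
  shows "\<exists>c. \<forall>nu\<in>rearr lam. phi nu = (\<Sum>mu\<in>rearr lam. c mu * eval (fstar mu) (tilde nu))"
proof -
  let ?O = "rearr lam"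
  let ?E = "\<lambda>mu nu. eval (fstar mu) (tilde nu)"
  have step: "\<forall>phi. (\<forall>nu\<in>?O. k \<le> invs nu \<longrightarrow> phi nu = 0) \<longrightarrow>
      (\<exists>c. \<forall>nu\<in>?O. phi nu = (\<Sum>mu\<in>?O. c mu * ?E mu nu))" for k
  proof (induction k)
    case 0
    show ?case
    proof (intro allI impI)
      fix phi :: "nat list \<Rightarrow> K" assume "\<forall>nu\<in>?O. 0 \<le> invs nu \<longrightarrow> phi nu = 0"
      then show "\<exists>c. \<forall>nu\<in>?O. phi nu = (\<Sum>mu\<in>?O. c mu * ?E mu nu)"
        by (intro exI[of _ "\<lambda>_. 0"]) simp
    qed
  next
    case (Suc k)
    show ?case
    proof (intro allI impI)
      fix phi :: "nat list \<Rightarrow> K" assume ph: "\<forall>nu\<in>?O. Suc k \<le> invs nu \<longrightarrow> phi nu = 0"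
      define coef where "coef mu = (if invs mu = k then phi mu / ?E mu mu else 0)" for mu
      define phi' where "phi' nu = phi nu - (\<Sum>mu\<in>?O. coef mu * ?E mu nu)" for nu
      have sumeq: "(\<Sum>mu\<in>?O. coef mu * ?E mu nu) = (if invs nu = k then phi nu else 0)"
        if nu: "nu \<in> ?O" "k \<le> invs nu" for nu
      proof -
        have "(\<Sum>mu\<in>?O - {nu}. coef mu * ?E mu nu) = 0"
        proof (rule sum.neutral, rule ballI)
          fix mu assume mu: "mu \<in> ?O - {nu}"
          show "coef mu * ?E mu nu = 0"
          proof (cases "invs mu = k")
            case True
            then have "?E mu nu = 0" using fstar_diag(2)[OF lam, of mu nu] mu nu by auto
            then show ?thesis by simp
          qed (simp add: coef_def)
        qed
        then have "(\<Sum>mu\<in>?O. coef mu * ?E mu nu) = coef nu * ?E nu nu"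
          using sum.remove[OF finite_rearr nu(1), of "\<lambda>mu. coef mu * ?E mu nu"] by simp
        also have "\<dots> = (if invs nu = k then phi nu else 0)"
          using fstar_diag(1)[OF lam nu(1)] by (simp add: coef_def)
        finally show ?thesis .
      qed
      have "\<forall>nu\<in>?O. k \<le> invs nu \<longrightarrow> phi' nu = 0"
      proof (intro ballI impI)
        fix nu assume nu: "nu \<in> ?O" "k \<le> invs nu"
        show "phi' nu = 0"
        proof (cases "invs nu = k")
          case True then show ?thesis using sumeq[OF nu] by (simp add: phi'_def)
        next
          case False then show ?thesis using sumeq[OF nu] ph nu by (simp add: phi'_def)
        qed
      qed
      then obtain c' where c': "\<forall>nu\<in>?O. phi' nu = (\<Sum>mu\<in>?O. c' mu * ?E mu nu)"
        using Suc.IH by blast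
      show "\<exists>c. \<forall>nu\<in>?O. phi nu = (\<Sum>mu\<in>?O. c mu * ?E mu nu)"
      proof (intro exI[of _ "\<lambda>mu. c' mu + coef mu"] ballI)
        fix nu assume "nu \<in> ?O"
        then have "phi nu = phi' nu + (\<Sum>mu\<in>?O. coef mu * ?E mu nu)" by (simp add: phi'_def)
        also have "\<dots> = (\<Sum>mu\<in>?O. (c' mu + coef mu) * ?E mu nu)"
          using c' \<open>nu \<in> ?O\<close> by (simp add: distrib_right sum.distrib)
        finally show "phi nu = (\<Sum>mu\<in>?O. (c' mu + coef mu) * ?E mu nu)" .
      qed
    qed
  qed
  have "\<forall>nu\<in>?O. Suc (Max (invs ` ?O)) \<le> invs nu \<longrightarrow> phi nu = 0"
  proof (intro ballI impI)
    fix nu assume nu: "nu \<in> ?O" "Suc (Max (invs ` ?O)) \<le> invs nu"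
    have "invs nu \<le> Max (invs ` ?O)" using finite_rearr nu(1) by (intro Max_ge) auto
    then show "phi nu = 0" using nu(2) by linarith
  qed
  then show ?thesis using step by blast
qed

theorem part1:
  assumes lam: "is_partition lam"
  shows "is_basis_family fstar (rearr lam) (Vstar lam)"
  unfolding is_basis_family_def
proof (intro conjI allI impI ballI)
  let ?O = "rearr lam"
  let ?E = "\<lambda>mu nu. eval (fstar mu) (tilde nu)"
  show "fstar mu \<in> Vstar lam" if "mu \<in> ?O" for mu using fstar_Vstar[OF lam that] .
next
  let ?O = "rearr lam"
  let ?E = "\<lambda>mu nu. eval (fstar mu) (tilde nu)"
  fix S c mu
  assume S: "finite S \<and> S \<subseteq> rearr lam \<and> (\<Sum>i\<in>S. scal (c i) (fstar i)) = 0" and mu: "mu \<in> S"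
  show "c mu = 0"
  proof (rule ccontr)
    assume cmu: "c mu \<noteq> 0"
    define A where "A = {x\<in>S. c x \<noteq> 0}"
    have A: "finite A" "A \<noteq> {}" using S mu cmu by (auto simp: A_def)
    define m where "m = Max (invs ` A)"
    have "m \<in> invs ` A" unfolding m_def using A by (intro Max_in) auto
    then obtain mu0 where mu0: "mu0 \<in> A" "invs mu0 = m" by auto
    have mmax: "x \<in> A \<Longrightarrow> invs x \<le> m" for x unfolding m_def using A by (auto intro: Max_ge)
    have mu0O: "mu0 \<in> ?O" using mu0 S by (auto simp: A_def)
    have "0 = eval (\<Sum>i\<in>S. scal (c i) (fstar i)) (tilde mu0)" using S by simp
    also have "\<dots> = (\<Sum>i\<in>S. c i * ?E i mu0)" by (simp add: eval_sum)
    also have "\<dots> = c mu0 * ?E mu0 mu0"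
    proof -
      have "(\<Sum>i\<in>S - {mu0}. c i * ?E i mu0) = 0"
      proof (rule sum.neutral, rule ballI)
        fix x assume x: "x \<in> S - {mu0}"
        show "c x * ?E x mu0 = 0"
        proof (cases "c x = 0")
          case False
          then have "x \<in> A" using x by (simp add: A_def)
          then have "?E x mu0 = 0"
            using fstar_diag(2)[OF lam, of x mu0] x S mu0O mmax mu0 by auto
          then show ?thesis by simp
        qed simp
      qed
      moreover have "mu0 \<in> S" using mu0 by (simp add: A_def)
      ultimately show ?thesis using sum.remove[of S mu0 "\<lambda>i. c i * ?E i mu0"] S by simp
    qed
    finally have "c mu0 * ?E mu0 mu0 = 0" by simp
    then show False using fstar_diag(1)[OF lam mu0O] mu0 by (simp add: A_def)
  qed
next
  let ?O = "rearr lam"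
  let ?E = "\<lambda>mu nu. eval (fstar mu) (tilde nu)"
  fix g assume g: "g \<in> Vstar lam"
  obtain c where c: "\<forall>nu\<in>?O. eval g (tilde nu) = (\<Sum>mu\<in>?O. c mu * ?E mu nu)"
    using match[OF lam, of "\<lambda>nu. eval g (tilde nu)"] by blast
  define h where "h = g - (\<Sum>mu\<in>?O. scal (c mu) (fstar mu))"
  have hV: "h \<in> Vstar lam"
    unfolding h_def by (intro Vstar_diff g Vstar_sum Vstar_scal fstar_Vstar[OF lam])
  have "h = 0"
  proof (rule interp_inj[of h "length lam" "sum_list lam"])
    show "h \<in> pd (length lam) (sum_list lam)" using hV by (simp add: Vstar_iff)
    show "\<forall>nu\<in>Del (length lam) (sum_list lam). eval h (tilde nu) = 0"
    proof
      fix nu assume nu: "nu \<in> Del (length lam) (sum_list lam)"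
      show "eval h (tilde nu) = 0"
      proof (cases "nu \<in> ?O")
        case True
        then show ?thesis using c by (simp add: h_def eval_diff eval_sum)
      next
        case False
        then show ?thesis using hV nu by (simp add: Vstar_iff Del_def comps_def)
      qed
    qed
  qed
  then show "\<exists>S c. finite S \<and> S \<subseteq> rearr lam \<and> g = (\<Sum>i\<in>S. scal (c i) (fstar i))"
    using finite_rearr by (intro exI[of _ ?O] exI[of _ c]) (simp add: h_def)
qed



lemma sum_list_sort: "sum_list (sort mu) = sum_list (mu :: nat list)"
  by (metis mset_sort sum_mset_sum_list)

lemma sum_list_sort_rev: "sum_list (rev (sort mu)) = sum_list (mu :: nat list)"
  by (simp add: sum_list_sort)

lemma fstar_pd:
  assumes "length mu = n"
  shows "fstar mu \<in> pd n (sum_list mu)"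
  using fstar_Vstar[OF partition_sort rearr_sort, of mu] assms
  by (simp add: Vstar_iff sum_list_sort)

lemma fstar_out:
  assumes "length mu = n" "length nu = n" "sum_list nu \<le> sum_list mu" "mset nu \<noteq> mset mu"
  shows "eval (fstar mu) (tilde nu) = 0"
  using fstar_Vstar[OF partition_sort rearr_sort, of mu] assms
  by (simp add: Vstar_iff sum_list_sort comps_def rearr_def)

lemma polys_pd: "f \<in> polys n \<Longrightarrow> f \<in> pd n (\<Sum>m\<in>Poly_Mapping.keys f. mdeg m)"
  unfolding pd_iff by (auto simp: polys_def intro: member_le_sum)

lemma part2_indep:
  assumes S: "finite S" "S \<subseteq> comps n" and z: "(\<Sum>i\<in>S. scal (c i) (fstar i)) = 0" and mu: "mu \<in> S"
  shows "c mu = 0"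
proof (rule ccontr)
  let ?E = "\<lambda>mu nu. eval (fstar mu) (tilde nu)"
  assume cmu: "c mu \<noteq> 0"
  define A where "A = {x\<in>S. c x \<noteq> 0}"
  have A: "finite A" "A \<noteq> {}" using S mu cmu by (auto simp: A_def)
  define s where "s = Min (sum_list ` A)"
  have "s \<in> sum_list ` A" unfolding s_def using A by (intro Min_in) auto
  then obtain mu1 where mu1: "mu1 \<in> A" "sum_list mu1 = s" by auto
  have smin: "x \<in> A \<Longrightarrow> s \<le> sum_list x" for x unfolding s_def using A by (auto intro: Min_le)
  define lam where "lam = rev (sort mu1)"
  have lam: "is_partition lam" by (simp add: lam_def partition_sort)
  define B where "B = A \<inter> rearr lam"
  have B: "finite B" "B \<noteq> {}" using A mu1 rearr_sort[of mu1] by (auto simp: B_def lam_def)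
  define m where "m = Max (invs ` B)"
  have "m \<in> invs ` B" unfolding m_def using B by (intro Max_in) auto
  then obtain mu0 where mu0: "mu0 \<in> B" "invs mu0 = m" by auto
  have mmax: "x \<in> B \<Longrightarrow> invs x \<le> m" for x unfolding m_def using B by (auto intro: Max_ge)
  have mu0O: "mu0 \<in> rearr lam" and mu0A: "mu0 \<in> A" using mu0 by (auto simp: B_def)
  have mset0: "mset mu0 = mset mu1" using mu0O by (simp add: rearr_def lam_def)
  have sum0: "sum_list mu0 = s" using mset0 mu1 by (metis sum_mset_sum_list)
  have len0: "length mu0 = n" using mu0A S by (auto simp: A_def comps_def)
  have len1: "length mu1 = n" using mu1 S by (auto simp: A_def comps_def)
  have "0 = eval (\<Sum>i\<in>S. scal (c i) (fstar i)) (tilde mu0)" using z by simp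
  also have "\<dots> = (\<Sum>i\<in>S. c i * ?E i mu0)" by (simp add: eval_sum)
  also have "\<dots> = c mu0 * ?E mu0 mu0"
  proof -
    have "(\<Sum>i\<in>S - {mu0}. c i * ?E i mu0) = 0"
    proof (rule sum.neutral, rule ballI)
      fix x assume x: "x \<in> S - {mu0}"
      show "c x * ?E x mu0 = 0"
      proof (cases "c x = 0")
        case False
        then have xA: "x \<in> A" using x by (simp add: A_def)
        have lx: "length x = n" using x S by (auto simp: comps_def)
        have "?E x mu0 = 0"
        proof (cases "x \<in> rearr lam")
          case True
          then show ?thesis using fstar_diag(2)[OF lam True, of mu0] x mu0O mmax[of x] xA mu0 by (auto simp: B_def)
        next
          case False
          have "mset mu0 \<noteq> mset x"
            using False mset0 lx len0 len1 by (auto simp: rearr_def lam_def)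
          then show ?thesis using fstar_out[OF lx len0] smin[OF xA] sum0 by simp
        qed
        then show ?thesis by simp
      qed simp
    qed
    moreover have "mu0 \<in> S" using mu0A by (simp add: A_def)
    ultimately show ?thesis using sum.remove[of S mu0 "\<lambda>i. c i * ?E i mu0"] S by simp
  qed
  finally have "c mu0 * ?E mu0 mu0 = 0" by simp
  then show False using fstar_diag(1)[OF lam mu0O] mu0A by (simp add: A_def)
qed

definition Lk :: "nat \<Rightarrow> nat \<Rightarrow> nat list set" where
  "Lk n k = {mu. length mu = n \<and> sum_list mu < k}"

lemma finite_Lk: "finite (Lk n k)"
  by (rule finite_subset[OF _ finite_Del[of n k]]) (auto simp: Lk_def Del_def)

lemma part2_span_aux:
  "\<exists>c. \<forall>nu. length nu = n \<and> sum_list nu < k \<longrightarrow>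
     eval f (tilde nu) = (\<Sum>mu\<in>Lk n k. c mu * eval (fstar mu) (tilde nu))"
proof (induction k)
  case 0 then show ?case by simp
next
  case (Suc k)
  let ?E = "\<lambda>mu nu. eval (fstar mu) (tilde nu)"
  obtain c where c: "\<forall>nu. length nu = n \<and> sum_list nu < k \<longrightarrow> eval f (tilde nu) = (\<Sum>mu\<in>Lk n k. c mu * ?E mu nu)"
    using Suc.IH by blast
  define phi where "phi nu = eval f (tilde nu) - (\<Sum>mu\<in>Lk n k. c mu * ?E mu nu)" for nu
  have "\<forall>lam. \<exists>cl. is_partition lam \<longrightarrow> (\<forall>nu\<in>rearr lam. phi nu = (\<Sum>mu\<in>rearr lam. cl mu * ?E mu nu))"
    using match by blast
  then obtain C where C: "\<And>lam nu. is_partition lam \<Longrightarrow> nu \<in> rearr lam \<Longrightarrow> phi nu = (\<Sum>mu\<in>rearr lam. C lam mu * ?E mu nu)"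
    by metis
  define c' where "c' mu = (if sum_list mu = k then C (rev (sort mu)) mu else c mu)" for mu
  define Eq where "Eq = {mu. length mu = n \<and> sum_list mu = k}"
  have LS: "Lk n (Suc k) = Lk n k \<union> Eq" by (auto simp: Lk_def Eq_def)
  have finEq: "finite Eq" by (rule finite_subset[OF _ finite_Lk[of n "Suc k"]]) (auto simp: Lk_def Eq_def)
  show ?case
  proof (intro exI[of _ c'] allI impI)
    fix nu assume nu: "length nu = n \<and> sum_list nu < Suc k"
    have "(\<Sum>mu\<in>Lk n (Suc k). c' mu * ?E mu nu) = (\<Sum>mu\<in>Lk n k. c' mu * ?E mu nu) + (\<Sum>mu\<in>Eq. c' mu * ?E mu nu)"
      unfolding LS
      apply (rule sum.union_disjoint)
        apply (rule finite_Lk)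
       apply (rule finEq)
      apply (auto simp: Lk_def Eq_def)
      done
    also have "(\<Sum>mu\<in>Lk n k. c' mu * ?E mu nu) = (\<Sum>mu\<in>Lk n k. c mu * ?E mu nu)"
      by (intro sum.cong refl) (auto simp: c'_def Lk_def)
    finally have split: "(\<Sum>mu\<in>Lk n (Suc k). c' mu * ?E mu nu) =
        (\<Sum>mu\<in>Lk n k. c mu * ?E mu nu) + (\<Sum>mu\<in>Eq. c' mu * ?E mu nu)" .
    show "eval f (tilde nu) = (\<Sum>mu\<in>Lk n (Suc k). c' mu * ?E mu nu)"
    proof (cases "sum_list nu < k")
      case True
      have "(\<Sum>mu\<in>Eq. c' mu * ?E mu nu) = 0"
      proof (rule sum.neutral, rule ballI)
        fix mu assume mu: "mu \<in> Eq"
        have "mset nu \<noteq> mset mu"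
        proof
          assume "mset nu = mset mu"
          then have "sum_list nu = sum_list mu" by (metis sum_mset_sum_list)
          then show False using mu True by (simp add: Eq_def)
        qed
        then show "c' mu * ?E mu nu = 0" using fstar_out[of mu n nu] mu nu True by (simp add: Eq_def)
      qed
      then show ?thesis using split c nu True by simp
    next
      case False
      then have snu: "sum_list nu = k" using nu by simp
      define lnu where "lnu = rev (sort nu)"
      have plnu: "is_partition lnu" by (simp add: lnu_def partition_sort)
      have nuO: "nu \<in> rearr lnu" by (simp add: lnu_def rearr_sort)
      have sub: "rearr lnu \<subseteq> Eq"
      proof
        fix mu assume "mu \<in> rearr lnu"
        then have "length mu = length nu" "mset mu = mset nu" by (auto simp: rearr_def lnu_def)
        then show "mu \<in> Eq" using nu snu by (simp add: Eq_def) (metis sum_mset_sum_list)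
      qed
      have "(\<Sum>mu\<in>Eq. c' mu * ?E mu nu) = (\<Sum>mu\<in>rearr lnu. c' mu * ?E mu nu)"
      proof (rule sum.mono_neutral_right[OF finEq sub], rule ballI)
        fix mu assume mu: "mu \<in> Eq - rearr lnu"
        then have "mset nu \<noteq> mset mu" using nu by (auto simp: rearr_def lnu_def Eq_def)
        then show "c' mu * ?E mu nu = 0" using fstar_out[of mu n nu] mu nu snu by (simp add: Eq_def)
      qed
      also have "\<dots> = (\<Sum>mu\<in>rearr lnu. C lnu mu * ?E mu nu)"
      proof (intro sum.cong refl)
        fix mu assume mu: "mu \<in> rearr lnu"
        then have "rev (sort mu) = lnu" by (rule sort_rearr[OF plnu])
        moreover have "sum_list mu = k" using mu sub by (auto simp: Eq_def)
        ultimately show "c' mu * ?E mu nu = C lnu mu * ?E mu nu" by (simp add: c'_def)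
      qed
      also have "\<dots> = phi nu" using C[OF plnu nuO] by simp
      finally show ?thesis using split by (simp add: phi_def)
    qed
  qed
qed

lemma part2_span:
  assumes f: "f \<in> polys n"
  shows "\<exists>S c. finite S \<and> S \<subseteq> comps n \<and> f = (\<Sum>i\<in>S. scal (c i) (fstar i))"
proof -
  define d where "d = (\<Sum>m\<in>Poly_Mapping.keys f. mdeg m)"
  have fd: "f \<in> pd n d" using polys_pd[OF f] by (simp add: d_def)
  obtain c where c: "\<forall>nu. length nu = n \<and> sum_list nu < Suc d \<longrightarrow>
     eval f (tilde nu) = (\<Sum>mu\<in>Lk n (Suc d). c mu * eval (fstar mu) (tilde nu))"
    using part2_span_aux by blast
  define h where "h = f - (\<Sum>mu\<in>Lk n (Suc d). scal (c mu) (fstar mu))"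
  have hd: "h \<in> pd n d"
    unfolding h_def
  proof (intro pd_diff fd pd_sum pd_scal)
    fix mu assume "mu \<in> Lk n (Suc d)"
    then show "fstar mu \<in> pd n d" using fstar_pd[of mu n] by (auto simp: Lk_def elim: pd_mono)
  qed
  have "h = 0"
  proof (rule interp_inj[OF hd], rule ballI)
    fix nu assume "nu \<in> Del n d"
    then show "eval h (tilde nu) = 0" using c by (simp add: h_def eval_diff eval_sum Del_def)
  qed
  then show ?thesis using finite_Lk
    by (intro exI[of _ "Lk n (Suc d)"] exI[of _ c]) (auto simp: h_def Lk_def comps_def)
qed

theorem proposition2p14:
  fixes lam :: "nat list" and n :: nat
  assumes "length lam = n" and "is_partition lam"
  shows "is_basis_family fstar (rearr lam) (Vstar lam)
         \<and> is_basis_family fstar (comps n) (polys n)"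
proof
  show "is_basis_family fstar (rearr lam) (Vstar lam)" using part1[OF assms(2)] .
  show "is_basis_family fstar (comps n) (polys n)"
    unfolding is_basis_family_def
  proof (intro conjI ballI allI impI)
    fix mu assume "mu \<in> comps n"
    then show "fstar mu \<in> polys n" using fstar_pd[of mu n] pd_subset_polys by (auto simp: comps_def)
  next
    fix S c mu assume "finite S \<and> S \<subseteq> comps n \<and> (\<Sum>i\<in>S. scal (c i) (fstar i)) = 0" "mu \<in> S"
    then show "c mu = 0" using part2_indep by blast
  next
    fix g assume "g \<in> polys n"
    then show "\<exists>S c. finite S \<and> S \<subseteq> comps n \<and> g = (\<Sum>i\<in>S. scal (c i) (fstar i))"
      by (rule part2_span)
  qed
qed

end
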